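(* Let $n\ge1$ be an integer. Define the affine map $A_1:\mathbb{R}^2\to\mathbb{R}^{2n+2}$ by $(A_1x)_j=\sin\!\big(\tfrac{\pi j}{n+1}\big)x_1+\cos\!\big(\tfrac{\pi j}{n+1}\big)x_2-1$ for $j=1,\dots,2n+2$, let $G(y)=\sum_{j=1}^{2n+2}(-1)^jy_j$, and $F=G\circ\sigma\circ A_1:\mathbb{R}^2\to\mathbb{R}$. Let $K=\{x\in\mathbb{R}^2:(A_1x)_j\le0\text{ for all }j\}$ (a $(2n+2)$-gon containing the origin). Then $K$ is a flat $2$-cell of $\mathcal{C}(F)$ with $F(K)=\{0\}$, $K$ is a connected component of $F^{-1}(0)\cap\big(\text{union of flat cells of }\mathcal{C}(F)\big)$, and $$H_1\big(F_{\le0},F_{\le0}\setminus K\big)\cong\mathbb{Z}^n,\qquad H_i\big(F_{\le0},F_{\le0}\setminus K\big)=0\ \text{ for } i\ne1,$$ where $F_{\le 0}=F^{-1}((-\infty,0])$. In particular the local $H$-complexity of $K$ is $n$.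
   Context: $\sigma$ applies $\mathrm{ReLU}(t)=\max\{0,t\}$ coordinatewise. $\mathcal{C}(F)$ is the polyhedral complex of the line arrangement $\{x:(A_1x)_j=0\}$ (cells = closures of nonempty sets of constant sign vector $(\operatorname{sgn}(A_1x)_j)_j$); a cell is flat if $F$ is constant on it (all $0$-cells are flat). $H_*$ is singular homology with $\mathbb{Z}$ coefficients. For a connected component $K$ of $F^{-1}(a)\cap(\text{union of flat cells})$, its $i$th local $H$-complexity is $\operatorname{rank}H_i(F_{\le a},F_{\le a}\setminus K)$ and its total local $H$-complexity is the sum over $i$. *)

theory Defs
  imports "HOL-Analysis.Analysis" "HOL-Homology.Homology"
begin

text \<open>The affine map A_1 : R^2 -> R^(2n+2), coordinates indexed by j = 1..2n+2.\<close>
definition A1 :: "nat \<Rightarrow> real^2 \<Rightarrow> nat \<Rightarrow> real" where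
  "A1 n x j = sin (pi * real j / real (n + 1)) * x$1 + cos (pi * real j / real (n + 1)) * x$2 - 1"

definition relu :: "real \<Rightarrow> real" where
  "relu t = max 0 t"

definition Fnet :: "nat \<Rightarrow> real^2 \<Rightarrow> real" where
  "Fnet n x = (\<Sum>j=1..2*n+2. (-1)^j * relu (A1 n x j))"

text \<open>Cells of the polyhedral complex C(F): closures of nonempty sets of constant sign vector.\<close>
definition sign_region :: "nat \<Rightarrow> (nat \<Rightarrow> real) \<Rightarrow> (real^2) set" where
  "sign_region n s = {x. \<forall>j\<in>{1..2*n+2}. sgn (A1 n x j) = s j}"

definition cells :: "nat \<Rightarrow> (real^2) set set" where
  "cells n = {closure (sign_region n s) | s. sign_region n s \<noteq> {}}"

definition flat_cell :: "nat \<Rightarrow> (real^2) set \<Rightarrow> bool" where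
  "flat_cell n C \<longleftrightarrow> C \<in> cells n \<and> (\<exists>c. \<forall>x\<in>C. Fnet n x = c)"

definition flat_union :: "nat \<Rightarrow> (real^2) set" where
  "flat_union n = \<Union>{C. flat_cell n C}"

definition Z_independent :: "('a, 'b) monoid_scheme \<Rightarrow> 'a set \<Rightarrow> bool" where
  "Z_independent G S \<longleftrightarrow> S \<subseteq> carrier G \<and> finite S \<and>
     (\<forall>c :: 'a \<Rightarrow> int. finprod G (\<lambda>s. s [^]\<^bsub>G\<^esub> c s) S = \<one>\<^bsub>G\<^esub> \<longrightarrow> (\<forall>s\<in>S. c s = 0))"

definition group_rank :: "('a, 'b) monoid_scheme \<Rightarrow> nat" where
  "group_rank G = Sup {card S | S. Z_independent G S}"

definition total_local_H_complexity :: "('a::topological_space \<Rightarrow> real) \<Rightarrow> real \<Rightarrow> 'a set \<Rightarrow> nat" where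
  "total_local_H_complexity F a K =
     (let X = {x. F x \<le> a};
          r = (\<lambda>i. group_rank (relative_homology_group i (subtopology euclidean X) (X - K)))
      in \<Sum>i\<in>{i. r i \<noteq> 0}. r i)"

end

theory Submission
  imports Defs
begin



lemma hom_finprod_gen:
  assumes G: "comm_group G" and H: "comm_group H" and h: "h \<in> hom G H"
    and fin: "finite S" and f: "f \<in> S \<rightarrow> carrier G"
  shows "h (finprod G f S) = finprod H (\<lambda>s. h (f s)) S"
  using fin f
proof (induction S rule: finite_induct)
  case empty
  interpret G: comm_group G by fact
  interpret H: comm_group H by fact
  interpret gh: group_hom G H h using h by (simp add: group_hom_def group_hom_axioms_def G.group_axioms H.group_axioms)
  show ?case by simp
next
  case (insert a F)
  interpret G: comm_group G by fact
  interpret H: comm_group H by fact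
  interpret gh: group_hom G H h using h by (simp add: group_hom_def group_hom_axioms_def G.group_axioms H.group_axioms)
  have fa: "f a \<in> carrier G" and fF: "f \<in> F \<rightarrow> carrier G" using insert by auto
  have "h (finprod G f (insert a F)) = h (f a \<otimes>\<^bsub>G\<^esub> finprod G f F)"
    using insert fa fF by simp
  also have "\<dots> = h (f a) \<otimes>\<^bsub>H\<^esub> h (finprod G f F)"
    using fa fF by simp
  also have "\<dots> = h (f a) \<otimes>\<^bsub>H\<^esub> finprod H (\<lambda>s. h (f s)) F"
    using insert fF by simp
  also have "\<dots> = finprod H (\<lambda>s. h (f s)) (insert a F)"
    using insert fa fF by (subst H.finprod_insert) (auto simp: Pi_def)
  finally show ?case .
qed

lemma Z_independent_iso:
  assumes G: "comm_group G" and H: "comm_group H" and h: "h \<in> iso G H"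
    and S: "Z_independent G S"
  shows "Z_independent H (h ` S) \<and> card (h ` S) = card S"
proof -
  interpret G: comm_group G by fact
  interpret H: comm_group H by fact
  have hh: "h \<in> hom G H" using h by (simp add: iso_def)
  interpret gh: group_hom G H h using hh by (simp add: group_hom_def group_hom_axioms_def G.group_axioms H.group_axioms)
  have Sc: "S \<subseteq> carrier G" and fin: "finite S" and ind: "\<And>c. finprod G (\<lambda>s. s [^]\<^bsub>G\<^esub> c s) S = \<one>\<^bsub>G\<^esub> \<Longrightarrow> (\<forall>s\<in>S. c s = (0::int))"
    using S by (auto simp: Z_independent_def)
  have inj: "inj_on h (carrier G)" using h by (simp add: iso_def bij_betw_def)
  have injS: "inj_on h S" using inj Sc inj_on_subset by blast
  have "Z_independent H (h ` S)"
    unfolding Z_independent_def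
  proof (intro conjI allI impI ballI)
    show "h ` S \<subseteq> carrier H" using Sc by auto
    show "finite (h ` S)" using fin by simp
    fix c :: "_ \<Rightarrow> int" and t
    assume eq: "finprod H (\<lambda>s. s [^]\<^bsub>H\<^esub> c s) (h ` S) = \<one>\<^bsub>H\<^esub>" and t: "t \<in> h ` S"
    have "finprod H (\<lambda>s. s [^]\<^bsub>H\<^esub> c s) (h ` S) = finprod H (\<lambda>s. h s [^]\<^bsub>H\<^esub> c (h s)) S"
      using Sc injS by (subst H.finprod_reindex) auto
    also have "\<dots> = finprod H (\<lambda>s. h (s [^]\<^bsub>G\<^esub> c (h s))) S"
      using Sc by (intro H.finprod_cong') (auto simp: gh.hom_int_pow)
    also have "\<dots> = h (finprod G (\<lambda>s. s [^]\<^bsub>G\<^esub> c (h s)) S)"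
      using Sc fin by (intro hom_finprod_gen[symmetric] G H hh) auto
    finally have "h (finprod G (\<lambda>s. s [^]\<^bsub>G\<^esub> c (h s)) S) = h \<one>\<^bsub>G\<^esub>" using eq by simp
    moreover have "finprod G (\<lambda>s. s [^]\<^bsub>G\<^esub> c (h s)) S \<in> carrier G"
      using Sc by (intro G.finprod_closed) auto
    ultimately have "finprod G (\<lambda>s. s [^]\<^bsub>G\<^esub> c (h s)) S = \<one>\<^bsub>G\<^esub>"
      using inj_onD[OF inj] by blast
    then have "\<forall>s\<in>S. c (h s) = 0" by (rule ind)
    then show "c t = 0" using t by auto
  qed
  then show ?thesis using card_image[OF injS] by simp
qed

lemma group_rank_sub:
  assumes G: "comm_group G" and H: "comm_group H" and iso: "G \<cong> H"
  shows "{card S | S. Z_independent G S} \<subseteq> {card S | S. Z_independent H S}"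
proof -
  obtain h where h: "h \<in> iso G H" using iso by (auto simp: is_iso_def)
  show ?thesis
  proof
    fix k assume "k \<in> {card S | S. Z_independent G S}"
    then obtain S where "k = card S" "Z_independent G S" by auto
    then show "k \<in> {card S | S. Z_independent H S}"
      using Z_independent_iso[OF G H h] by (metis (mono_tags, lifting) mem_Collect_eq)
  qed
qed

lemma group_rank_iso:
  assumes G: "comm_group G" and H: "comm_group H" and iso: "G \<cong> H"
  shows "group_rank G = group_rank H"
proof -
  have iso': "H \<cong> G" using iso G by (simp add: comm_group.axioms(2) group.iso_sym)
  show ?thesis unfolding group_rank_def
    using group_rank_sub[OF G H iso] group_rank_sub[OF H G iso'] by (simp add: subset_antisym)
qed

lemma group_rank_trivial:
  assumes "trivial_group G"
  shows "group_rank G = 0"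
proof -
  have emp: "Z_independent G S \<Longrightarrow> S = {}" for S
  proof (rule ccontr)
    assume ind: "Z_independent G S" and ne: "S \<noteq> {}"
    have grp: "group G" using assms by (simp add: trivial_group_def)
    have Sc: "S \<subseteq> {\<one>\<^bsub>G\<^esub>}" using ind assms by (auto simp: Z_independent_def trivial_group_def)
    then have S1: "S = {\<one>\<^bsub>G\<^esub>}" using ne by auto
    have cg: "comm_group G"
      by (rule group.group_comm_groupI[OF grp]) (use assms in \<open>auto simp: trivial_group_def\<close>)
    have "finprod G (\<lambda>s. s [^]\<^bsub>G\<^esub> (\<lambda>_. 1::int) s) S = \<one>\<^bsub>G\<^esub>"
      using S1 by (intro comm_monoid.finprod_one_eqI[OF comm_group.axioms(1)[OF cg]]) (simp add: group.int_pow_one[OF grp])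
    note eq1 = this
    have HH: "\<forall>c::_\<Rightarrow>int. finprod G (\<lambda>s. s [^]\<^bsub>G\<^esub> c s) S = \<one>\<^bsub>G\<^esub> \<longrightarrow> (\<forall>s\<in>S. c s = 0)"
      using ind by (simp add: Z_independent_def)
    have "\<forall>s\<in>S. (\<lambda>_. 1::int) s = 0" using HH[rule_format, of "\<lambda>_. 1"] eq1 by blast
    then show False using ne by auto
  qed
  have z: "Z_independent G {}" by (simp add: Z_independent_def)
  have "{card S | S. Z_independent G S} = {0}"
  proof
    show "{card S | S. Z_independent G S} \<subseteq> {0}"
    proof
      fix k assume "k \<in> {card S | S. Z_independent G S}"
      then obtain S where k: "k = card S" and S: "Z_independent G S" by blast
      have "S = {}" by (rule emp[OF S])
      then show "k \<in> {0}" using k by simp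
    qed
    show "{0} \<subseteq> {card S | S. Z_independent G S}" using z by force
  qed
  then show ?thesis by (simp add: group_rank_def)
qed







lemma int_dependence:
  fixes v :: "'a \<Rightarrow> nat \<Rightarrow> int"
  assumes "finite S" "card S > n"
  shows "\<exists>c. (\<exists>s\<in>S. c s \<noteq> 0) \<and> (\<forall>i<n. (\<Sum>s\<in>S. c s * v s i) = 0)"
  using assms
proof (induction n arbitrary: S v)
  case 0
  then have "S \<noteq> {}" by auto
  then show ?case by (intro exI[of _ "\<lambda>_. 1"]) auto
next
  case (Suc n)
  show ?case
  proof (cases "\<forall>s\<in>S. v s n = 0")
    case True
    obtain c where c: "\<exists>s\<in>S. c s \<noteq> 0" "\<forall>i<n. (\<Sum>s\<in>S. c s * v s i) = 0"
      using Suc.IH[of S v] Suc.prems by auto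
    show ?thesis
    proof (intro exI conjI)
      show "\<exists>s\<in>S. c s \<noteq> 0" by fact
      show "\<forall>i<Suc n. (\<Sum>s\<in>S. c s * v s i) = 0"
        using c True by (auto simp: less_Suc_eq)
    qed
  next
    case False
    then obtain s0 where s0: "s0 \<in> S" and a: "v s0 n \<noteq> 0" by auto
    define a where "a = v s0 n"
    define S' where "S' = S - {s0}"
    define v' where "v' = (\<lambda>s i. a * v s i - v s n * v s0 i)"
    have finS': "finite S'" using Suc.prems by (simp add: S'_def)
    have cardS': "card S' > n" using Suc.prems s0 by (simp add: S'_def)
    obtain c' where c': "\<exists>s\<in>S'. c' s \<noteq> 0" "\<forall>i<n. (\<Sum>s\<in>S'. c' s * v' s i) = 0"
      using Suc.IH[OF finS' cardS', of v'] by auto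
    define c where "c = (\<lambda>s. if s = s0 then - (\<Sum>t\<in>S'. c' t * v t n) else a * c' s)"
    have key: "(\<Sum>s\<in>S. c s * v s i) = (\<Sum>s\<in>S'. c' s * v' s i)" for i
    proof -
      have "(\<Sum>s\<in>S. c s * v s i) = c s0 * v s0 i + (\<Sum>s\<in>S'. c s * v s i)"
        using Suc.prems s0 by (simp add: S'_def sum.remove)
      also have "(\<Sum>s\<in>S'. c s * v s i) = (\<Sum>s\<in>S'. a * c' s * v s i)"
        by (rule sum.cong) (auto simp: c_def S'_def)
      also have "c s0 * v s0 i = - (\<Sum>t\<in>S'. c' t * v t n * v s0 i)"
        by (simp add: c_def sum_distrib_right)
      finally have "(\<Sum>s\<in>S. c s * v s i) = (\<Sum>s\<in>S'. a * c' s * v s i - c' s * v s n * v s0 i)"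
        by (simp add: sum_subtractf)
      also have "\<dots> = (\<Sum>s\<in>S'. c' s * v' s i)"
        by (rule sum.cong) (auto simp: v'_def algebra_simps)
      finally show ?thesis .
    qed
    show ?thesis
    proof (intro exI conjI)
      obtain s1 where s1: "s1 \<in> S'" "c' s1 \<noteq> 0" using c' by auto
      then have "c s1 \<noteq> 0" using a by (auto simp: c_def S'_def a_def)
      then show "\<exists>s\<in>S. c s \<noteq> 0" using s1 by (auto simp: S'_def)
      show "\<forall>i<Suc n. (\<Sum>s\<in>S. c s * v s i) = 0"
      proof (intro allI impI)
        fix i assume "i < Suc n"
        then consider "i < n" | "i = n" by linarith
        then show "(\<Sum>s\<in>S. c s * v s i) = 0"
        proof cases
          case 1 then show ?thesis using key c' by simp
        next
          case 2 then show ?thesis unfolding key by (simp add: v'_def a_def)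
        qed
      qed
    qed
  qed
qed

abbreviation ZG :: "nat \<Rightarrow> (nat \<Rightarrow> int) monoid" where
  "ZG n \<equiv> sum_group {..<n} (\<lambda>_. integer_group)"

lemma carrier_ZG: "carrier (ZG n) = {x. x \<in> extensional {..<n}}"
  by (auto simp: carrier_sum_group PiE_def)

lemma comm_group_ZG: "comm_group (ZG n)"
proof -
  have g: "group (ZG n)" by simp
  show ?thesis
    by (rule group.group_comm_groupI[OF g]) (auto simp: add.commute)
qed

lemma proj_hom_ZG: "(\<lambda>x. x i) \<in> hom (ZG n) integer_group" if "i < n"
  using that by (auto intro!: homI)

lemma finprod_integer_group: "finite S \<Longrightarrow> finprod integer_group f S = (\<Sum>s\<in>S. f s)"
proof (induction S rule: finite_induct)
  case empty
  then show ?case by (simp add: comm_monoid.finprod_empty[OF comm_group.axioms(1)[OF abelian_integer_group]])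
next
  case (insert a F)
  then show ?case by (simp add: comm_monoid.finprod_insert[OF comm_group.axioms(1)[OF abelian_integer_group]])
qed

lemma coord_finprod_ZG:
  assumes "finite S" "S \<subseteq> carrier (ZG n)" "i < n"
  shows "finprod (ZG n) (\<lambda>s. s [^]\<^bsub>ZG n\<^esub> c s) S i = (\<Sum>s\<in>S. c s * s i)"
proof -
  interpret Z: comm_group "ZG n" by (rule comm_group_ZG)
  have h: "(\<lambda>x. x i) \<in> hom (ZG n) integer_group" using assms(3) by (rule proj_hom_ZG)
  have "finprod (ZG n) (\<lambda>s. s [^]\<^bsub>ZG n\<^esub> c s) S i = finprod integer_group (\<lambda>s. (s [^]\<^bsub>ZG n\<^esub> c s) i) S"
    using assms by (intro hom_finprod_gen[OF comm_group_ZG abelian_integer_group h]) auto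
  also have "\<dots> = finprod integer_group (\<lambda>s. c s * s i) S"
    using assms
    by (intro comm_monoid.finprod_cong'[OF comm_group.axioms(1)[OF abelian_integer_group]])
       (auto simp: hom_int_pow[OF h])
  also have "\<dots> = (\<Sum>s\<in>S. c s * s i)" using assms by (simp add: finprod_integer_group)
  finally show ?thesis .
qed

lemma eq_one_ZG:
  assumes "x \<in> carrier (ZG n)" "\<And>i. i < n \<Longrightarrow> x i = 0"
  shows "x = \<one>\<^bsub>ZG n\<^esub>"
  using assms by (auto simp: carrier_ZG extensional_def)

lemma group_rank_ZG: "group_rank (ZG n) = n"
proof -
  interpret Z: comm_group "ZG n" by (rule comm_group_ZG)
  have le: "card S \<le> n" if S: "Z_independent (ZG n) S" for S
  proof (rule ccontr)
    assume "\<not> card S \<le> n"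
    then have cS: "card S > n" by simp
    have Sc: "S \<subseteq> carrier (ZG n)" and fin: "finite S"
      and ind: "\<And>c. finprod (ZG n) (\<lambda>s. s [^]\<^bsub>ZG n\<^esub> c s) S = \<one>\<^bsub>ZG n\<^esub> \<Longrightarrow> (\<forall>s\<in>S. c s = (0::int))"
      using S by (auto simp: Z_independent_def)
    obtain c where c: "\<exists>s\<in>S. c s \<noteq> 0" "\<forall>i<n. (\<Sum>s\<in>S. c s * s i) = 0"
      using int_dependence[OF fin cS, of "\<lambda>s. s"] by auto
    have "finprod (ZG n) (\<lambda>s. s [^]\<^bsub>ZG n\<^esub> c s) S = \<one>\<^bsub>ZG n\<^esub>"
    proof (rule eq_one_ZG)
      show "finprod (ZG n) (\<lambda>s. s [^]\<^bsub>ZG n\<^esub> c s) S \<in> carrier (ZG n)"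
        using Sc by (intro Z.finprod_closed) auto
      fix i assume "i < n"
      then show "finprod (ZG n) (\<lambda>s. s [^]\<^bsub>ZG n\<^esub> c s) S i = 0"
        using coord_finprod_ZG[OF fin Sc] c by simp
    qed
    then show False using ind c by auto
  qed
  define e where "e = (\<lambda>k. \<lambda>i\<in>{..<n}. if i = k then 1 else (0::int))"
  have injE: "inj_on e {..<n}"
  proof
    fix k l assume "k \<in> {..<n}" "l \<in> {..<n}" "e k = e l"
    then have "e k k = e l k" by simp
    then show "k = l" using \<open>k \<in> {..<n}\<close> by (auto simp: e_def split: if_splits)
  qed
  have indE: "Z_independent (ZG n) (e ` {..<n})"
    unfolding Z_independent_def
  proof (intro conjI allI impI ballI)
    show Ec: "e ` {..<n} \<subseteq> carrier (ZG n)" by (auto simp: carrier_ZG e_def)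
    show "finite (e ` {..<n})" by simp
    fix c :: "_ \<Rightarrow> int" and t
    assume eq: "finprod (ZG n) (\<lambda>s. s [^]\<^bsub>ZG n\<^esub> c s) (e ` {..<n}) = \<one>\<^bsub>ZG n\<^esub>" and t: "t \<in> e ` {..<n}"
    then obtain k where k: "k < n" "t = e k" by auto
    have "0 = finprod (ZG n) (\<lambda>s. s [^]\<^bsub>ZG n\<^esub> c s) (e ` {..<n}) k" using eq k by simp
    also have "\<dots> = (\<Sum>s\<in>e ` {..<n}. c s * s k)"
      using Ec k by (intro coord_finprod_ZG) auto
    also have "\<dots> = (\<Sum>j\<in>{..<n}. c (e j) * e j k)"
      using injE by (simp add: sum.reindex)
    also have "\<dots> = (\<Sum>j\<in>{..<n}. if j = k then c (e k) else 0)"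
      by (rule sum.cong) (auto simp: e_def k)
    also have "\<dots> = c (e k)" using k by simp
    finally show "c t = 0" using k by simp
  qed
  have "card (e ` {..<n}) = n" using injE by (simp add: card_image)
  then have mem: "n \<in> {card S | S. Z_independent (ZG n) S}" using indE by force
  show ?thesis unfolding group_rank_def
    by (rule cSup_eq_maximum[OF mem]) (use le in auto)
qed



definition th :: "nat \<Rightarrow> nat \<Rightarrow> real" where "th n j = pi * real j / real (n+1)"
definition L :: "real \<Rightarrow> real^2 \<Rightarrow> real" where "L \<phi> x = sin \<phi> * x$1 + cos \<phi> * x$2"
definition nxt :: "nat \<Rightarrow> nat \<Rightarrow> nat" where "nxt n j = (if j = 2*n+2 then 1 else j+1)"
definition adj :: "nat \<Rightarrow> nat \<Rightarrow> nat \<Rightarrow> bool" where "adj n i k \<longleftrightarrow> k = nxt n i \<or> i = nxt n k"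

lemma A1_L: "A1 n x j = L (th n j) x - 1"
  by (simp add: A1_def L_def th_def)

lemma L_add_pi: "L (\<phi> + pi) x = - L \<phi> x" by (simp add: L_def)
lemma L_add_2pi: "L (\<phi> + 2*pi) x = L \<phi> x" by (simp add: L_def)

lemma L_arc_identity:
  "sin (\<alpha>+\<beta>) * L \<phi> x = sin \<beta> * L (\<phi>-\<alpha>) x + sin \<alpha> * L (\<phi>+\<beta>) x"
  by (simp add: L_def sin_add cos_add sin_diff cos_diff algebra_simps)

lemma cos_lt_1: "0 < b \<Longrightarrow> b < pi \<Longrightarrow> cos b < 1"
  using cos_monotone_0_pi[of 0 b] by simp

lemma sin_sum_lt:
  assumes "0 < a" "0 < b" "a + b < pi"
  shows "sin (a+b) < sin a + sin b"
proof -
  have sa: "sin a > 0" "sin b > 0" using assms by (auto intro!: sin_gt_zero)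
  have ca: "cos a < 1" "cos b < 1" using assms by (auto intro!: cos_lt_1)
  have "sin a * cos b < sin a" using sa ca by (simp add: mult_less_cancel_left1)
  moreover have "cos a * sin b < sin b" using sa ca by (simp add: mult_less_cancel_right1)
  ultimately show ?thesis by (simp add: sin_add)
qed

lemma arc:
  assumes "0 < a" "0 < b" "a + b < pi"
  shows "\<exists>e>0. \<forall>x. L (\<phi>-a) x \<ge> 1 \<longrightarrow> L (\<phi>+b) x \<ge> 1 \<longrightarrow> L \<phi> x - 1 \<ge> e"
proof -
  have sa: "sin a > 0" "sin b > 0" "sin (a+b) > 0" using assms by (auto intro!: sin_gt_zero)
  define e where "e = (sin a + sin b) / sin (a+b) - 1"
  have e: "e > 0" using sin_sum_lt[OF assms] sa by (simp add: e_def field_simps)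
  show ?thesis
  proof (intro exI conjI allI impI)
    fix x assume h1: "L (\<phi>-a) x \<ge> 1" and h2: "L (\<phi>+b) x \<ge> 1"
    have "sin (a+b) * L \<phi> x \<ge> sin b + sin a"
      unfolding L_arc_identity using h1 h2 sa
      by (metis add_mono mult.right_neutral mult_left_mono order_less_imp_le)
    then have "L \<phi> x \<ge> (sin a + sin b) / sin (a+b)"
      using sa by (simp add: field_simps)
    then show "L \<phi> x - 1 \<ge> e" by (simp add: e_def)
  qed (fact e)
qed

lemma nonadj_bound_lt:
  assumes n: "n \<ge> 1" and ij: "i \<in> {1..2*n+2}" "k \<in> {1..2*n+2}" "i < k" and na: "\<not> adj n i k"
  shows "\<exists>l\<in>{1..2*n+2}. \<exists>e>0. \<forall>x. A1 n x i \<ge> 0 \<longrightarrow> A1 n x k \<ge> 0 \<longrightarrow> A1 n x l \<ge> e"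
proof -
  define m where "m = real (n+1)"
  have m: "m \<ge> 2" using n by (simp add: m_def)
  define d where "d = k - i"
  have kd: "k = i + d" using ij by (simp add: d_def)
  have d2: "d \<ge> 2"
  proof (rule ccontr)
    assume "\<not> d \<ge> 2"
    then have "k = i + 1" using ij kd by simp
    moreover have "i \<noteq> 2*n+2" using ij by simp
    ultimately show False using na by (simp add: adj_def nxt_def)
  qed
  have thi: "th n j = pi * real j / m" for j by (simp add: th_def m_def)
  consider "real d < m" | "real d = m" | "real d > m" by linarith
  then show ?thesis
  proof cases
    case 1
    define \<phi> where "\<phi> = th n (i+1)"
    define a where "a = pi / m"
    define b where "b = pi * (real d - 1) / m"
    have ab: "0 < a" "0 < b" "a + b < pi"
      using m d2 1 by (auto simp: a_def b_def field_simps)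
    obtain e where e: "e > 0" "\<And>x. L (\<phi>-a) x \<ge> 1 \<Longrightarrow> L (\<phi>+b) x \<ge> 1 \<Longrightarrow> L \<phi> x - 1 \<ge> e"
      using arc[OF ab, of \<phi>] by blast
    have e1: "\<phi> - a = th n i" using m by (simp add: \<phi>_def a_def thi field_simps)
    have e2: "\<phi> + b = th n k" using m by (simp add: \<phi>_def b_def thi kd field_simps)
    show ?thesis
    proof (intro bexI exI conjI allI impI)
      fix x assume "A1 n x i \<ge> 0" "A1 n x k \<ge> 0"
      then show "A1 n x (i+1) \<ge> e" using e(2)[of x] e1 e2 by (simp add: A1_L \<phi>_def)
    qed (use e ij in auto)
  next
    case 2
    have "th n k = th n i + pi" using m 2 by (simp add: thi kd field_simps)
    then have "A1 n x k = - L (th n i) x - 1" for x by (simp add: A1_L L_add_pi)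
    then show ?thesis using ij
      by (intro bexI[of _ i] exI[of _ 1]) (auto simp: A1_L)
  next
    case 3
    have dle: "d \<le> 2*n+1" using ij kd by simp
    have dne: "d \<noteq> 2*n+1"
    proof
      assume "d = 2*n+1"
      then have "i = 1" "k = 2*n+2" using ij kd by auto
      then show False using na by (simp add: adj_def nxt_def)
    qed
    define \<phi> where "\<phi> = pi * (real k + 1) / m"
    define a where "a = pi / m"
    define b where "b = pi * (2*m - real d - 1) / m"
    have d': "real d \<le> 2 * m - 2" using dle dne by (simp add: m_def)
    have mpos: "m > 0" using m by simp
    have ab: "0 < a" "0 < b" "a + b < pi"
    proof -
      show "0 < a" using mpos by (simp add: a_def)
      have "2*m - real d - 1 > 0" using d' by linarith
      then show "0 < b" using mpos by (simp add: b_def)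
      have "a + b = pi * ((2*m - real d) / m)" using mpos by (simp add: a_def b_def field_simps)
      also have "(2*m - real d) / m < 1" using mpos 3 by (simp add: field_simps)
      then have "pi * ((2*m - real d) / m) < pi * 1" by (intro mult_strict_left_mono) auto
      finally show "a + b < pi" by simp
    qed
    obtain e where e: "e > 0" "\<And>x. L (\<phi>-a) x \<ge> 1 \<Longrightarrow> L (\<phi>+b) x \<ge> 1 \<Longrightarrow> L \<phi> x - 1 \<ge> e"
      using arc[OF ab, of \<phi>] by blast
    have e1: "\<phi> - a = th n k" using m by (simp add: \<phi>_def a_def thi field_simps)
    have e2: "\<phi> + b = th n i + 2*pi" using m by (simp add: \<phi>_def b_def thi kd field_simps)
    have e3: "L (th n (nxt n k)) x = L \<phi> x" for x
    proof (cases "k = 2*n+2")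
      case True
      then have "\<phi> = th n 1 + 2*pi" using m by (simp add: \<phi>_def thi m_def field_simps)
      then show ?thesis using True by (simp add: nxt_def L_add_2pi)
    next
      case False
      then show ?thesis by (simp add: nxt_def \<phi>_def thi add.commute)
    qed
    show ?thesis
    proof (intro bexI exI conjI allI impI)
      fix x assume "A1 n x i \<ge> 0" "A1 n x k \<ge> 0"
      then show "A1 n x (nxt n k) \<ge> e" using e(2)[of x] e1 e2 e3[of x] by (simp add: A1_L L_add_2pi)
    qed (use e ij in \<open>auto simp: nxt_def\<close>)
  qed
qed

lemma adj_sym: "adj n i k = adj n k i" by (auto simp: adj_def)

lemma nonadj_bound:
  assumes n: "n \<ge> 1" and ij: "i \<in> {1..2*n+2}" "k \<in> {1..2*n+2}" "i \<noteq> k" and na: "\<not> adj n i k"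
  shows "\<exists>l\<in>{1..2*n+2}. \<exists>e>0. \<forall>x. A1 n x i \<ge> 0 \<longrightarrow> A1 n x k \<ge> 0 \<longrightarrow> A1 n x l \<ge> e"
proof (cases "i < k")
  case True then show ?thesis using nonadj_bound_lt[OF n ij(1,2) True na] by blast
next
  case False
  then have "k < i" using ij by simp
  then show ?thesis using nonadj_bound_lt[OF n ij(2,1) _ ] na adj_sym by blast
qed

lemma delta_exists:
  assumes n: "n \<ge> 1"
  shows "\<exists>\<delta>>0. \<delta> \<le> 1 \<and> (\<forall>x. (\<forall>j\<in>{1..2*n+2}. A1 n x j < \<delta>) \<longrightarrow>
     (\<forall>i\<in>{1..2*n+2}. \<forall>k\<in>{1..2*n+2}. i \<noteq> k \<and> \<not> adj n i k \<longrightarrow> \<not> (A1 n x i \<ge> 0 \<and> A1 n x k \<ge> 0)))"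
proof -
  define P where "P = {(i,k). i \<in> {1..2*n+2} \<and> k \<in> {1..2*n+2} \<and> i \<noteq> k \<and> \<not> adj n i k}"
  have finP: "finite P" unfolding P_def
    by (rule finite_subset[of _ "{1..2*n+2} \<times> {1..2*n+2}"]) auto
  have "\<forall>p\<in>P. \<exists>le. snd le > 0 \<and> fst le \<in> {1..2*n+2} \<and> (\<forall>x. A1 n x (fst p) \<ge> 0 \<longrightarrow> A1 n x (snd p) \<ge> 0 \<longrightarrow> A1 n x (fst le) \<ge> snd le)"
  proof
    fix p assume "p \<in> P"
    then obtain i k where p: "p = (i,k)" "i \<in> {1..2*n+2}" "k \<in> {1..2*n+2}" "i \<noteq> k" "\<not> adj n i k"
      by (auto simp: P_def)
    obtain l e where "l \<in> {1..2*n+2}" "e > 0" "\<forall>x. A1 n x i \<ge> 0 \<longrightarrow> A1 n x k \<ge> 0 \<longrightarrow> A1 n x l \<ge> e"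
      using nonadj_bound[OF n p(2,3,4,5)] by blast
    then show "\<exists>le. snd le > 0 \<and> fst le \<in> {1..2*n+2} \<and> (\<forall>x. A1 n x (fst p) \<ge> 0 \<longrightarrow> A1 n x (snd p) \<ge> 0 \<longrightarrow> A1 n x (fst le) \<ge> snd le)"
      using p by (intro exI[of _ "(l,e)"]) auto
  qed
  then obtain f where f: "\<And>p. p \<in> P \<Longrightarrow> snd (f p) > 0 \<and> fst (f p) \<in> {1..2*n+2} \<and> (\<forall>x. A1 n x (fst p) \<ge> 0 \<longrightarrow> A1 n x (snd p) \<ge> 0 \<longrightarrow> A1 n x (fst (f p)) \<ge> snd (f p))"
    by metis
  define \<delta> where "\<delta> = Min (insert 1 ((\<lambda>p. snd (f p)) ` P))"
  have fin: "finite (insert 1 ((\<lambda>p. snd (f p)) ` P))" using finP by simp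
  have dpos: "\<delta> > 0" unfolding \<delta>_def using fin f by (subst Min_gr_iff) auto
  have dle1: "\<delta> \<le> 1" unfolding \<delta>_def using fin by (intro Min_le) auto
  have dle: "\<delta> \<le> snd (f p)" if "p \<in> P" for p unfolding \<delta>_def using fin that by (intro Min_le) auto
  show ?thesis
  proof (intro exI conjI allI impI ballI dpos dle1 notI)
    fix x i k
    assume V: "\<forall>j\<in>{1..2*n+2}. A1 n x j < \<delta>" and i: "i \<in> {1..2*n+2}" and k: "k \<in> {1..2*n+2}"
      and ik: "i \<noteq> k \<and> \<not> adj n i k" and pos: "A1 n x i \<ge> 0 \<and> A1 n x k \<ge> 0"
    have p: "(i,k) \<in> P" using i k ik by (simp add: P_def)
    have "A1 n x (fst (f (i,k))) \<ge> snd (f (i,k))" using f[OF p] pos by auto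
    moreover have "A1 n x (fst (f (i,k))) < \<delta>" using V f[OF p] by auto
    ultimately show False using dle[OF p] by simp
  qed (use dpos dle1 in auto)
qed



definition prv :: "nat \<Rightarrow> nat \<Rightarrow> nat" where "prv n j = (if j = 1 then 2*n+2 else j - 1)"
definition Vd :: "nat \<Rightarrow> real \<Rightarrow> (real^2) set" where "Vd n \<delta> = {x. \<forall>j\<in>{1..2*n+2}. A1 n x j < \<delta>}"
definition Kn :: "nat \<Rightarrow> (real^2) set" where "Kn n = {x. \<forall>j\<in>{1..2*n+2}. A1 n x j \<le> 0}"
definition Qd :: "nat \<Rightarrow> real \<Rightarrow> nat \<Rightarrow> (real^2) set" where
  "Qd n \<delta> j = {x \<in> Vd n \<delta>. 0 < A1 n x j \<and> A1 n x (prv n j) \<le> A1 n x j \<and> A1 n x (nxt n j) \<le> A1 n x j}"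
definition good :: "nat \<Rightarrow> real \<Rightarrow> bool" where
  "good n \<delta> \<longleftrightarrow> (\<forall>x. (\<forall>j\<in>{1..2*n+2}. A1 n x j < \<delta>) \<longrightarrow>
     (\<forall>i\<in>{1..2*n+2}. \<forall>k\<in>{1..2*n+2}. i \<noteq> k \<and> \<not> adj n i k \<longrightarrow> \<not> (A1 n x i \<ge> 0 \<and> A1 n x k \<ge> 0)))"

lemma nxt_in: "j \<in> {1..2*n+2} \<Longrightarrow> nxt n j \<in> {1..2*n+2}" by (auto simp: nxt_def)
lemma prv_in: "j \<in> {1..2*n+2} \<Longrightarrow> prv n j \<in> {1..2*n+2}" by (auto simp: prv_def)
lemma adj_cases: "j \<in> {1..2*n+2} \<Longrightarrow> i \<in> {1..2*n+2} \<Longrightarrow> adj n j i \<Longrightarrow> i = nxt n j \<or> i = prv n j"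
  by (auto simp: adj_def nxt_def prv_def split: if_splits)
lemma nxt_prv_distinct:
  assumes "n \<ge> 1" "j \<in> {1..2*n+2}"
  shows "j \<noteq> nxt n j" "j \<noteq> prv n j" "nxt n j \<noteq> prv n j" "\<not> adj n (nxt n j) (prv n j)"
  using assms by (auto simp: adj_def nxt_def prv_def split: if_splits)
lemma adj_nxt: "adj n j (nxt n j)" by (simp add: adj_def)
lemma adj_prv: "j \<in> {1..2*n+2} \<Longrightarrow> adj n j (prv n j)" by (auto simp: adj_def nxt_def prv_def)
lemma parity_nxt: "j \<in> {1..2*n+2} \<Longrightarrow> odd (nxt n j) \<longleftrightarrow> even j"
  by (auto simp: nxt_def)
lemma parity_prv: "j \<in> {1..2*n+2} \<Longrightarrow> odd (prv n j) \<longleftrightarrow> even j"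
  by (auto simp: prv_def)
lemma adj_parity: "i \<in> {1..2*n+2} \<Longrightarrow> k \<in> {1..2*n+2} \<Longrightarrow> adj n i k \<Longrightarrow> odd i \<longleftrightarrow> even k"
  by (auto simp: adj_def nxt_def split: if_splits)

lemma A1_scale: "A1 n (t *\<^sub>R x) j = t * (A1 n x j + 1) - 1"
  by (simp add: A1_def algebra_simps)
lemma A1_comb: "a + b = 1 \<Longrightarrow> A1 n (a *\<^sub>R u + b *\<^sub>R v) j = a * A1 n u j + b * A1 n v j"
  by (simp add: A1_def algebra_simps)

lemma continuous_A1 [continuous_intros]: "continuous_on S (\<lambda>x. A1 n x j)"
  unfolding A1_def by (intro continuous_intros)

lemma open_Vd: "open (Vd n \<delta>)"
proof -
  have "Vd n \<delta> = (\<Inter>j\<in>{1..2*n+2}. {x. A1 n x j < \<delta>})" by (auto simp: Vd_def)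
  also have "open \<dots>" by (intro open_INT finite_atLeastAtMost ballI open_Collect_less continuous_intros)
  finally show ?thesis .
qed

lemma closed_Kn: "closed (Kn n)"
proof -
  have "Kn n = (\<Inter>j\<in>{1..2*n+2}. {x. A1 n x j \<le> 0})" by (auto simp: Kn_def)
  also have "closed \<dots>" by (intro closed_INT ballI closed_Collect_le continuous_intros)
  finally show ?thesis .
qed

lemma Kn_Vd: "\<delta> > 0 \<Longrightarrow> Kn n \<subseteq> Vd n \<delta>"
  by (force simp: Kn_def Vd_def)

lemma good_pos:
  assumes "good n \<delta>" "x \<in> Vd n \<delta>" "i \<in> {1..2*n+2}" "k \<in> {1..2*n+2}" "i \<noteq> k" "\<not> adj n i k" "A1 n x i \<ge> 0"
  shows "A1 n x k < 0"
  using assms unfolding good_def Vd_def by force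

lemma Fnet_local:
  assumes n: "n \<ge> 1" and g: "good n \<delta>" and x: "x \<in> Vd n \<delta>" and j: "j \<in> {1..2*n+2}" and pos: "A1 n x j > 0"
  shows "Fnet n x = (-1)^j * (A1 n x j - relu (A1 n x (prv n j)) - relu (A1 n x (nxt n j)))"
proof -
  define p where "p = prv n j"
  define q where "q = nxt n j"
  have pq: "p \<in> {1..2*n+2}" "q \<in> {1..2*n+2}" unfolding p_def q_def by (rule prv_in[OF j], rule nxt_in[OF j])
  have dist: "j \<noteq> q" "j \<noteq> p" "q \<noteq> p" using nxt_prv_distinct[OF n j] by (auto simp: p_def q_def)
  have zero: "(-1)^i * relu (A1 n x i) = 0" if "i \<in> {1..2*n+2} - {j,p,q}" for i
  proof -
    have "\<not> adj n j i" using adj_cases[OF j, of i] that by (auto simp: p_def q_def)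
    then have "A1 n x i < 0" using good_pos[OF g x j, of i] that pos by auto
    then show ?thesis by (simp add: relu_def)
  qed
  have sp: "((-1::real)^p) = - ((-1::real)^j)" "((-1::real)^q) = - ((-1::real)^j)"
    using parity_prv[OF j] parity_nxt[OF j] by (auto simp: p_def q_def minus_one_power_iff)
  have "Fnet n x = (\<Sum>i\<in>{j,p,q}. (-1)^i * relu (A1 n x i))"
    unfolding Fnet_def using zero j pq by (intro sum.mono_neutral_right) auto
  also have "\<dots> = (-1)^j * relu (A1 n x j) + (-1)^p * relu (A1 n x p) + (-1)^q * relu (A1 n x q)"
    using dist by (simp add: algebra_simps)
  finally show ?thesis using pos sp by (simp add: relu_def p_def q_def algebra_simps)
qed

lemma Fle_odd:
  assumes n: "n \<ge> 1" and g: "good n \<delta>" and x: "x \<in> Vd n \<delta>" and j: "j \<in> {1..2*n+2}" and oj: "odd j"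
    and pos: "A1 n x j > 0"
  shows "Fnet n x \<le> 0 \<longleftrightarrow> A1 n x (prv n j) \<le> A1 n x j \<and> A1 n x (nxt n j) \<le> A1 n x j"
proof -
  have F: "Fnet n x = relu (A1 n x (prv n j)) + relu (A1 n x (nxt n j)) - A1 n x j"
    using Fnet_local[OF n g x j pos] oj by simp
  have pq: "prv n j \<in> {1..2*n+2}" "nxt n j \<in> {1..2*n+2}" by (rule prv_in[OF j], rule nxt_in[OF j])
  have na: "\<not> adj n (nxt n j) (prv n j)" "nxt n j \<noteq> prv n j" using nxt_prv_distinct[OF n j] by auto
  have "A1 n x (prv n j) < 0 \<or> A1 n x (nxt n j) < 0"
    using good_pos[OF g x pq(2) pq(1) na(2) na(1)] by linarith
  then show ?thesis using F pos by (auto simp: relu_def)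
qed

lemma Qd_char:
  assumes n: "n \<ge> 1" and g: "good n \<delta>" and j: "j \<in> {1..2*n+2}" and oj: "odd j"
  shows "Qd n \<delta> j = {x \<in> Vd n \<delta>. Fnet n x \<le> 0 \<and> A1 n x j > 0}"
  using Fle_odd[OF n g _ j oj] by (auto simp: Qd_def)

lemma Qd_Kn: "j \<in> {1..2*n+2} \<Longrightarrow> Qd n \<delta> j \<inter> Kn n = {}"
  by (force simp: Qd_def Kn_def)

lemma Qd_disjoint:
  assumes n: "n \<ge> 1" and g: "good n \<delta>" and j: "j \<in> {1..2*n+2}" "odd j" and k: "k \<in> {1..2*n+2}" "odd k" and jk: "j \<noteq> k"
  shows "Qd n \<delta> j \<inter> Qd n \<delta> k = {}"
proof -
  have "\<not> adj n j k" using adj_parity[OF j(1) k(1)] j k by auto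
  then show ?thesis using good_pos[OF g _ j(1) k(1) jk] by (force simp: Qd_def)
qed

lemma Fle_in_some_odd:
  assumes n: "n \<ge> 1" and g: "good n \<delta>" and x: "x \<in> Vd n \<delta>" "x \<notin> Kn n" and F: "Fnet n x \<le> 0"
  shows "\<exists>j\<in>{1..2*n+2}. odd j \<and> A1 n x j > 0"
proof -
  obtain i where i: "i \<in> {1..2*n+2}" "A1 n x i > 0" using x by (force simp: Kn_def)
  show ?thesis
  proof (cases "odd i")
    case True then show ?thesis using i by blast
  next
    case False
    have "Fnet n x = A1 n x i - relu (A1 n x (prv n i)) - relu (A1 n x (nxt n i))"
      using Fnet_local[OF n g x(1) i] False by simp
    then have "A1 n x (prv n i) > 0 \<or> A1 n x (nxt n i) > 0" using F i by (auto simp: relu_def)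
    moreover have "odd (prv n i)" "odd (nxt n i)" using False i by (auto simp: parity_prv parity_nxt)
    ultimately show ?thesis using i by (meson nxt_in prv_in)
  qed
qed

lemma NK_Union:
  assumes n: "n \<ge> 1" and g: "good n \<delta>"
  shows "({x. Fnet n x \<le> 0} \<inter> Vd n \<delta>) - Kn n = (\<Union>j\<in>{j\<in>{1..2*n+2}. odd j}. Qd n \<delta> j)"
proof
  show "{x. Fnet n x \<le> 0} \<inter> Vd n \<delta> - Kn n \<subseteq> (\<Union>j\<in>{j\<in>{1..2*n+2}. odd j}. Qd n \<delta> j)"
  proof
    fix x assume x: "x \<in> {x. Fnet n x \<le> 0} \<inter> Vd n \<delta> - Kn n"
    then obtain j where j: "j \<in> {1..2*n+2}" "odd j" "A1 n x j > 0" using Fle_in_some_odd[OF n g] by blast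
    then have "x \<in> Qd n \<delta> j" using Qd_char[OF n g j(1,2)] x by auto
    then show "x \<in> (\<Union>j\<in>{j\<in>{1..2*n+2}. odd j}. Qd n \<delta> j)" using j by auto
  qed
  show "(\<Union>j\<in>{j\<in>{1..2*n+2}. odd j}. Qd n \<delta> j) \<subseteq> {x. Fnet n x \<le> 0} \<inter> Vd n \<delta> - Kn n"
    using Qd_char[OF n g] Qd_Kn by fastforce
qed

lemma comb_lt: "0 \<le> a \<Longrightarrow> 0 \<le> b \<Longrightarrow> a + b = 1 \<Longrightarrow> y < c \<Longrightarrow> z < c \<Longrightarrow> a * y + b * z < (c::real)"
proof -
  assume ab: "0 \<le> a" "0 \<le> b" "a + b = 1" and yz: "y < c" "z < c"
  have "a * y \<le> a * c" "b * z \<le> b * c" using yz ab by (auto intro: mult_left_mono)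
  moreover have "a * y < a * c \<or> b * z < b * c" using yz ab by (cases "a = 0") auto
  ultimately have "a * y + b * z < a * c + b * c" by linarith
  then show ?thesis using ab by (simp add: distrib_right[symmetric])
qed

lemma comb_gt: "0 \<le> a \<Longrightarrow> 0 \<le> b \<Longrightarrow> a + b = 1 \<Longrightarrow> c < y \<Longrightarrow> c < z \<Longrightarrow> (c::real) < a * y + b * z"
  using comb_lt[of a b "-y" "-c" "-z"] by simp

lemma comb_le: "0 \<le> a \<Longrightarrow> 0 \<le> b \<Longrightarrow> y \<le> y' \<Longrightarrow> z \<le> z' \<Longrightarrow> a * y + b * z \<le> a * y' + b * (z'::real)"
  by (intro add_mono mult_left_mono) auto

lemma comb_le0: "0 \<le> a \<Longrightarrow> 0 \<le> b \<Longrightarrow> y \<le> 0 \<Longrightarrow> z \<le> 0 \<Longrightarrow> a * y + b * z \<le> (0::real)"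
  by (simp add: add_nonpos_nonpos mult_nonneg_nonpos)

lemma convex_Qd: "convex (Qd n \<delta> j)"
proof (rule convexI)
  fix u v and a b :: real
  assume uv: "u \<in> Qd n \<delta> j" "v \<in> Qd n \<delta> j" and ab: "0 \<le> a" "0 \<le> b" "a + b = 1"
  show "a *\<^sub>R u + b *\<^sub>R v \<in> Qd n \<delta> j"
    using uv unfolding Qd_def Vd_def
    by (auto simp: A1_comb[OF ab(3)] intro!: comb_lt[OF ab] comb_gt[OF ab] comb_le[OF ab(1,2)])
qed

lemma convex_Vd: "convex (Vd n \<delta>)"
proof (rule convexI)
  fix u v and a b :: real
  assume uv: "u \<in> Vd n \<delta>" "v \<in> Vd n \<delta>" and ab: "0 \<le> a" "0 \<le> b" "a + b = 1"
  show "a *\<^sub>R u + b *\<^sub>R v \<in> Vd n \<delta>"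
    using uv unfolding Vd_def
    by (auto simp: A1_comb[OF ab(3)] intro!: comb_lt[OF ab])
qed

lemma convex_Kn: "convex (Kn n)"
proof (rule convexI)
  fix u v and a b :: real
  assume uv: "u \<in> Kn n" "v \<in> Kn n" and ab: "0 \<le> a" "0 \<le> b" "a + b = 1"
  show "a *\<^sub>R u + b *\<^sub>R v \<in> Kn n"
    using uv unfolding Kn_def
    by (auto simp: A1_comb[OF ab(3)] intro!: comb_le0[OF ab(1,2)])
qed

lemma scale_le: "0 \<le> t \<Longrightarrow> t \<le> 1 \<Longrightarrow> A1 n (t *\<^sub>R x) i \<le> max (A1 n x i) (-1)"
proof -
  assume t: "0 \<le> t" "t \<le> 1"
  show ?thesis
  proof (cases "A1 n x i + 1 \<ge> 0")
    case True
    then have "t * (A1 n x i + 1) \<le> A1 n x i + 1" using t by (simp add: mult_left_le_one_le)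
    then show ?thesis by (simp add: A1_scale)
  next
    case False
    then have "t * (A1 n x i + 1) \<le> 0" using t by (simp add: mult_nonneg_nonpos)
    then show ?thesis by (simp add: A1_scale)
  qed
qed

lemma star_N:
  assumes n: "n \<ge> 1" and g: "good n \<delta>" and d: "\<delta> > 0" and x: "x \<in> {x. Fnet n x \<le> 0} \<inter> Vd n \<delta>"
    and t: "0 \<le> t" "t \<le> 1"
  shows "t *\<^sub>R x \<in> {x. Fnet n x \<le> 0} \<inter> Vd n \<delta>"
proof -
  have V: "t *\<^sub>R x \<in> Vd n \<delta>" unfolding Vd_def
  proof (intro CollectI ballI)
    fix i assume i: "i \<in> {1..2*n+2}"
    have "A1 n x i < \<delta>" using x i by (auto simp: Vd_def)
    then show "A1 n (t *\<^sub>R x) i < \<delta>" using scale_le[OF t, of n x i] d by linarith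
  qed
  have F0: "Fnet n y = 0" if "y \<in> Kn n" for y
    using that unfolding Fnet_def Kn_def by (intro sum.neutral) (auto simp: relu_def)
  show ?thesis
  proof (cases "x \<in> Kn n")
    case True
    have "t *\<^sub>R x \<in> Kn n" unfolding Kn_def
    proof (intro CollectI ballI)
      fix i assume i: "i \<in> {1..2*n+2}"
      have "A1 n x i \<le> 0" using True i by (auto simp: Kn_def)
      then show "A1 n (t *\<^sub>R x) i \<le> 0" using scale_le[OF t, of n x i] by linarith
    qed
    then show ?thesis using V F0 by auto
  next
    case False
    obtain j where j: "j \<in> {1..2*n+2}" "odd j" "A1 n x j > 0"
      using Fle_in_some_odd[OF n g _ False] x by auto
    have xQ: "x \<in> Qd n \<delta> j" using Qd_char[OF n g j(1,2)] x j by auto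
    have mono: "A1 n (t *\<^sub>R x) i \<le> A1 n (t *\<^sub>R x) j" if "A1 n x i \<le> A1 n x j" for i
      using that t by (simp add: A1_scale mult_left_mono)
    show ?thesis
    proof (cases "A1 n (t *\<^sub>R x) j > 0")
      case True
      have "t *\<^sub>R x \<in> Qd n \<delta> j" using xQ V True mono by (auto simp: Qd_def)
      then show ?thesis using Qd_char[OF n g j(1,2)] by auto
    next
      case False
      have evn: "A1 n (t *\<^sub>R x) i \<le> 0" if "i \<in> {1..2*n+2}" "even i" for i
      proof (cases "i = prv n j \<or> i = nxt n j")
        case True
        then show ?thesis using mono xQ False unfolding Qd_def by force
      next
        case i: False
        have "i \<noteq> j" using that j by auto
        moreover have "\<not> adj n j i" using adj_cases[OF j(1) that(1)] i by auto
        ultimately have "A1 n x i < 0" using good_pos[OF g _ j(1) that(1)] x j by auto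
        then show ?thesis using scale_le[OF t, of n x i] by simp
      qed
      have "Fnet n (t *\<^sub>R x) \<le> 0" unfolding Fnet_def
      proof (rule sum_nonpos)
        fix i assume i: "i \<in> {1..2*n+2}"
        show "(-1)^i * relu (A1 n (t *\<^sub>R x) i) \<le> 0"
        proof (cases "even i")
          case True then show ?thesis using evn[OF i True] by (simp add: relu_def)
        next
          case False then show ?thesis by (simp add: relu_def)
        qed
      qed
      then show ?thesis using V by auto
    qed
  qed
qed




lemma Qd_nonempty:
  assumes n: "n \<ge> 1" and d: "\<delta> > 0" and j: "j \<in> {1..2*n+2}"
  shows "Qd n \<delta> j \<noteq> {}"
proof -
  define t where "t = 1 + \<delta>/2"
  define c :: "real^2" where "c = t *\<^sub>R vector [sin (th n j), cos (th n j)]"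
  have Ac: "A1 n c i = t * cos (th n i - th n j) - 1" for i
    by (simp add: c_def A1_L L_def cos_diff algebra_simps)
  have le: "A1 n c i \<le> \<delta>/2" for i
  proof -
    have "t * cos (th n i - th n j) \<le> t * 1" using d by (intro mult_left_mono) (auto simp: t_def)
    then show ?thesis by (simp add: Ac t_def)
  qed
  have Aj: "A1 n c j = \<delta>/2" by (simp add: Ac t_def)
  have "c \<in> Qd n \<delta> j" unfolding Qd_def Vd_def using le Aj d
    by (auto intro: le_less_trans[OF le])
  then show ?thesis by auto
qed

lemma Fnet_Kn: "x \<in> Kn n \<Longrightarrow> Fnet n x = 0"
  unfolding Fnet_def Kn_def by (intro sum.neutral) (auto simp: relu_def)

lemma zero_Kn: "0 \<in> Kn n" by (simp add: Kn_def A1_def)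

lemma segment_N:
  assumes n: "n \<ge> 1" and g: "good n \<delta>" and d: "\<delta> > 0" and x: "x \<in> {x. Fnet n x \<le> 0} \<inter> Vd n \<delta>"
  shows "closed_segment 0 x \<subseteq> {x. Fnet n x \<le> 0} \<inter> Vd n \<delta>"
proof
  fix y assume "y \<in> closed_segment 0 x"
  then obtain u where u: "0 \<le> u" "u \<le> 1" "y = u *\<^sub>R x" by (auto simp: closed_segment_def)
  then show "y \<in> {x. Fnet n x \<le> 0} \<inter> Vd n \<delta>" using star_N[OF n g d x u(1,2)] by simp
qed

lemma trivial_homology_convex:
  fixes Q :: "(real^2) set"
  assumes "convex Q" "Q \<noteq> {}" "q \<noteq> 0"
  shows "trivial_group (homology_group q (top_of_set Q))"
proof -
  have cs: "contractible_space (top_of_set Q)" using convex_imp_contractible[OF assms(1)] by simp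
  have nt: "top_of_set Q \<noteq> trivial_topology" using assms(2) by (metis topspace_discrete_topology topspace_euclidean_subtopology)
  have "\<exists>a \<in> topspace (top_of_set Q). top_of_set Q homotopy_equivalent_space (subtopology (top_of_set Q) {a})"
    using contractible_eq_homotopy_equivalent_singleton_subtopology[THEN iffD1, OF cs] nt by blast
  then obtain a where a: "a \<in> Q" "top_of_set Q homotopy_equivalent_space subtopology (top_of_set Q) {a}"
    by auto
  have iso: "homology_group q (top_of_set Q) \<cong> homology_group q (subtopology (top_of_set Q) {a})"
    using a(2) by (rule homotopy_equivalent_space_imp_isomorphic_homology_groups)
  have "trivial_group (homology_group q (subtopology (top_of_set Q) {a}))"
    using a(1) assms(3) by (intro homology_dimension_axiom[of _ a]) auto
  then show ?thesis using iso isomorphic_group_triviality by (metis group_relative_homology_group)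
qed

lemma iso_H0_convex:
  fixes Q :: "(real^2) set"
  assumes "convex Q" "Q \<noteq> {}"
  shows "homology_group 0 (top_of_set Q) \<cong> integer_group"
  using assms convex_imp_path_connected[OF assms(1)] by (intro isomorphic_integer_zeroth_homology_group) auto

lemma trivial_sum_group:
  assumes "\<And>i. i \<in> I \<Longrightarrow> trivial_group (G i)"
  shows "trivial_group (sum_group I G)"
proof -
  have gr: "\<And>i. i \<in> I \<Longrightarrow> group (G i)" using assms by (simp add: trivial_group_def)
  have "carrier (sum_group I G) \<subseteq> {\<one>\<^bsub>sum_group I G\<^esub>}"
  proof
    fix x assume x: "x \<in> carrier (sum_group I G)"
    have "x i = (\<lambda>i\<in>I. \<one>\<^bsub>G i\<^esub>) i" for i
    proof (cases "i \<in> I")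
      case True
      then have "x i \<in> carrier (G i)" using x by (auto simp: carrier_sum_group[OF gr] PiE_def)
      then show ?thesis using True assms[OF True] by (auto simp: trivial_group_def)
    next
      case False
      then show ?thesis using x by (auto simp: carrier_sum_group[OF gr] PiE_def extensional_def)
    qed
    then show "x \<in> {\<one>\<^bsub>sum_group I G\<^esub>}" by auto
  qed
  moreover have grS: "group (sum_group I G)" using gr by simp
  ultimately show ?thesis using group.trivial_group_subset[OF grS] by simp
qed




lemma Q1_char:
  assumes n: "n \<ge> 1" and g: "good n \<delta>" and j: "j \<in> {1..2*n+2}" "odd j"
    and x: "x \<in> ({x. Fnet n x \<le> 0} \<inter> Vd n \<delta>) - Kn n" and pos: "A1 n x j \<ge> 0"
  shows "x \<in> Qd n \<delta> j"
proof -
  obtain k where k: "k \<in> {1..2*n+2}" "odd k" "x \<in> Qd n \<delta> k"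
    using NK_Union[OF n g] x by auto
  show ?thesis
  proof (cases "k = j")
    case True then show ?thesis using k by simp
  next
    case False
    have "\<not> adj n j k" using adj_parity[OF j(1) k(1)] j k by auto
    then have "A1 n x k < 0" using good_pos[OF g _ j(1) k(1)] False pos k(3) by (auto simp: Qd_def)
    then show ?thesis using k(3) by (auto simp: Qd_def)
  qed
qed

lemma homology_chain:
  assumes n: "n \<ge> 1" and g: "good n \<delta>" and d: "\<delta> > 0"
  defines "Fle \<equiv> {x. Fnet n x \<le> 0}"
  defines "R \<equiv> \<Union> (Qd n \<delta> ` {j\<in>{1..2*n+2}. odd j \<and> j \<noteq> 1})"
  shows "relative_homology_group p (top_of_set Fle) (Fle - Kn n) \<cong> homology_group (p-1) (top_of_set R)"
proof -
  define K where "K = Kn n"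
  define V where "V = Vd n \<delta>"
  define N where "N = Fle \<inter> V"
  define Q1 where "Q1 = Qd n \<delta> 1"
  have KV: "K \<subseteq> V" using Kn_Vd[OF d] by (simp add: K_def V_def)
  have j1: "(1::nat) \<in> {1..2*n+2}" "odd (1::nat)" by auto
  have NK: "N - K = (\<Union>j\<in>{j\<in>{1..2*n+2}. odd j}. Qd n \<delta> j)"
    using NK_Union[OF n g] by (simp add: N_def K_def V_def Fle_def)
  have Q1NK: "Q1 \<subseteq> N - K" using NK by (auto simp: Q1_def)
  have RNK: "R = (N - K) - Q1"
  proof
    show "R \<subseteq> N - K - Q1"
    proof
      fix x assume "x \<in> R"
      then obtain j where j: "j \<in> {1..2*n+2}" "odd j" "j \<noteq> 1" "x \<in> Qd n \<delta> j" by (auto simp: R_def)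
      then have "x \<notin> Q1" using Qd_disjoint[OF n g j(1,2) j1] by (auto simp: Q1_def)
      then show "x \<in> N - K - Q1" using NK j by auto
    qed
    show "N - K - Q1 \<subseteq> R" using NK by (auto simp: R_def Q1_def)
  qed
  have S1: "relative_homology_group p (top_of_set N) (N - K) \<cong> relative_homology_group p (top_of_set Fle) (Fle - K)"
  proof -
    define X where "X = top_of_set Fle"
    define U where "U = Fle - V"
    define T where "T = Fle - K"
    have "closedin X U" unfolding X_def U_def using closedin_closed_Int[of "- V" Fle] open_Vd[of n \<delta>]
      by (simp add: V_def Diff_eq closed_Compl)
    then have cl: "X closure_of U = U" by (rule closure_of_closedin)
    have "openin X T" unfolding X_def T_def using openin_open_Int[of "- K" Fle] closed_Kn[of n]
      by (simp add: K_def Diff_eq open_Compl)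
    then have int: "X interior_of T = T" by (rule interior_of_openin)
    have UT: "U \<subseteq> T" using KV by (auto simp: U_def T_def)
    have "hom_induced p (subtopology X (Fle - U)) (T - U) (subtopology X Fle) T id
      \<in> iso (relative_homology_group p (subtopology X (Fle - U)) (T - U)) (relative_homology_group p (subtopology X Fle) T)"
      by (rule homology_excision_axiom) (use cl int UT in \<open>auto simp: T_def\<close>)
    moreover have "subtopology X (Fle - U) = top_of_set N" "T - U = N - K" "subtopology X Fle = top_of_set Fle"
      by (auto simp: X_def U_def N_def T_def subtopology_subtopology Int_absorb intro: arg_cong[where f="top_of_set"])
    ultimately show ?thesis unfolding T_def by (auto simp: is_iso_def)
  qed
  have zN: "0 \<in> N" using zero_Kn[of n] KV Fnet_Kn[of 0 n] by (auto simp: N_def Fle_def K_def)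
  obtain c where c: "c \<in> Q1" using Qd_nonempty[OF n d j1(1)] by (auto simp: Q1_def)
  have cN: "c \<in> N" using c Q1NK by auto
  have segN: "closed_segment 0 x \<subseteq> N" if "x \<in> N" for x
    using segment_N[OF n g d] that by (simp add: N_def Fle_def V_def)
  have triv: "trivial_group (relative_homology_group r (top_of_set N) Q1)" for r
  proof (rule trivial_relative_homology_group_gen[where f="\<lambda>_. c"])
    show "continuous_map (top_of_set N) (subtopology (top_of_set N) Q1) (\<lambda>_. c)"
      using c cN by simp
    have NQ: "N \<inter> Q1 = Q1" using Q1NK by auto
    have sub: "subtopology (top_of_set N) Q1 = top_of_set Q1"
      by (simp add: subtopology_subtopology NQ)
    have "homotopic_with_canon (\<lambda>h. True) Q1 Q1 (\<lambda>_. c) id"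
    proof (rule homotopic_with_linear)
      fix x assume x: "x \<in> Q1"
      have cQ: "convex Q1" by (simp add: Q1_def convex_Qd)
      show "closed_segment ((\<lambda>_. c) x) (id x) \<subseteq> Q1"
        using closed_segment_subset[OF c x cQ] by simp
    qed (auto intro: continuous_intros)
    then show "homotopic_with (\<lambda>h. True) (subtopology (top_of_set N) Q1) (subtopology (top_of_set N) Q1) (\<lambda>_. c) id"
      by (simp add: sub)
    have h1: "homotopic_with_canon (\<lambda>h. True) N N (\<lambda>_. c) (\<lambda>_. 0)"
      by (rule homotopic_with_linear) (use segN[OF cN] in \<open>auto simp: closed_segment_commute\<close>)
    have h2: "homotopic_with_canon (\<lambda>h. True) N N (\<lambda>_. 0) id"
      by (rule homotopic_with_linear) (use segN in auto)
    show "homotopic_with (\<lambda>h. True) (top_of_set N) (top_of_set N) (\<lambda>_. c) id"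
      by (rule homotopic_with_trans[OF h1 h2])
  qed
  have S2: "relative_homology_group p (top_of_set N) (N - K) \<cong> relative_homology_group (p-1) (top_of_set (N - K)) Q1"
  proof -
    define X where "X = top_of_set N"
    have ex1: "exact_seq ([relative_homology_group(p-1) (subtopology X (N-K)) Q1,
                     relative_homology_group p X (N-K),
                     relative_homology_group p X Q1],
                    [hom_relboundary p X (N-K) Q1, hom_induced p X Q1 X (N-K) id])"
      using Q1NK by (rule homology_exactness_triple_1)
    have ex2: "exact_seq ([relative_homology_group(p-1) X Q1,
                     relative_homology_group(p-1) (subtopology X (N-K)) Q1,
                     relative_homology_group p X (N-K)],
                    [hom_induced (p-1) (subtopology X (N-K)) Q1 X Q1 id, hom_relboundary p X (N-K) Q1])"
      using Q1NK by (rule homology_exactness_triple_2)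
    have ex: "exact_seq ([relative_homology_group(p-1) X Q1,
                     relative_homology_group(p-1) (subtopology X (N-K)) Q1,
                     relative_homology_group p X (N-K),
                     relative_homology_group p X Q1],
                    [hom_induced (p-1) (subtopology X (N-K)) Q1 X Q1 id, hom_relboundary p X (N-K) Q1,
                     hom_induced p X Q1 X (N-K) id])"
      using ex1 ex2 by (metis exact_seq_cons_iff)
    have "hom_relboundary p X (N-K) Q1 \<in> iso (relative_homology_group p X (N-K)) (relative_homology_group(p-1) (subtopology X (N-K)) Q1)"
      by (rule very_short_exact_sequence[OF ex]) (use triv in \<open>auto simp: X_def\<close>)
    moreover have "subtopology X (N-K) = top_of_set (N-K)"
      by (auto simp: X_def subtopology_subtopology intro: arg_cong[where f="top_of_set"])
    ultimately show ?thesis by (auto simp: X_def is_iso_def)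
  qed
  have S3: "homology_group (p-1) (top_of_set R) \<cong> relative_homology_group (p-1) (top_of_set (N - K)) Q1"
  proof -
    define X where "X = top_of_set (N - K)"
    have Qo: "Q1 = (N - K) \<inter> {x. A1 n x 1 > 0}"
      using Q1NK Q1_char[OF n g j1] by (auto simp: Q1_def Qd_def N_def Fle_def V_def K_def)
    have Qc: "Q1 = (N - K) \<inter> {x. A1 n x 1 \<ge> 0}"
      using Q1NK Q1_char[OF n g j1] by (auto simp: Q1_def Qd_def N_def Fle_def V_def K_def)
    have "openin X Q1" unfolding X_def
      by (subst Qo, rule openin_open_Int) (intro open_Collect_less continuous_intros)
    then have int: "X interior_of Q1 = Q1" by (rule interior_of_openin)
    have "closedin X Q1" unfolding X_def
      by (subst Qc, rule closedin_closed_Int) (intro closed_Collect_le continuous_intros)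
    then have cl: "X closure_of Q1 = Q1" by (rule closure_of_closedin)
    have "hom_induced (p-1) (subtopology X ((N-K) - Q1)) (Q1 - Q1) (subtopology X (N-K)) Q1 id
      \<in> iso (relative_homology_group (p-1) (subtopology X ((N-K) - Q1)) (Q1 - Q1)) (relative_homology_group (p-1) (subtopology X (N-K)) Q1)"
      by (rule homology_excision_axiom) (use cl int Q1NK in auto)
    moreover have "subtopology X ((N-K) - Q1) = top_of_set R" "subtopology X (N-K) = top_of_set (N-K)"
      by (auto simp: X_def RNK subtopology_subtopology intro: arg_cong[where f="top_of_set"])
    ultimately show ?thesis by (auto simp: is_iso_def)
  qed
  have gN: "group (relative_homology_group (p-1) (top_of_set (N - K)) Q1)" by simp
  have gF: "group (relative_homology_group p (top_of_set N) (N - K))" by simp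
  have "relative_homology_group p (top_of_set Fle) (Fle - K) \<cong> relative_homology_group p (top_of_set N) (N - K)"
    using S1 gF by (metis group.iso_sym group_relative_homology_group)
  also have "\<dots> \<cong> relative_homology_group (p-1) (top_of_set (N - K)) Q1" by (rule S2)
  also have "\<dots> \<cong> homology_group (p-1) (top_of_set R)"
    using S3 by (metis group.iso_sym group_relative_homology_group)
  finally show ?thesis by (simp add: K_def)
qed




lemma card_odd_indices: "card {j\<in>{1..2*n+2}. odd j \<and> j \<noteq> (1::nat)} = n"
proof -
  have eq: "{j\<in>{1..2*n+2}. odd j \<and> j \<noteq> (1::nat)} = (\<lambda>k. 2*k+1) ` {1..n}"
  proof
    show "{j\<in>{1..2*n+2}. odd j \<and> j \<noteq> (1::nat)} \<subseteq> (\<lambda>k. 2*k+1) ` {1..n}"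
    proof
      fix j assume j: "j \<in> {j\<in>{1..2*n+2}. odd j \<and> j \<noteq> (1::nat)}"
      then obtain k where k: "j = 2*k+1" by (auto elim: oddE)
      then have "k \<in> {1..n}" using j by auto
      then show "j \<in> (\<lambda>k. 2*k+1) ` {1..n}" using k by auto
    qed
    show "(\<lambda>k. 2*k+1) ` {1..n} \<subseteq> {j\<in>{1..2*n+2}. odd j \<and> j \<noteq> (1::nat)}" by auto
  qed
  have "inj_on (\<lambda>k::nat. 2*k+1) {1..n}" by (auto simp: inj_on_def)
  then show ?thesis unfolding eq by (simp add: card_image)
qed

lemma homology_R:
  assumes n: "n \<ge> 1" and g: "good n \<delta>" and d: "\<delta> > 0"
  defines "R \<equiv> \<Union> (Qd n \<delta> ` {j\<in>{1..2*n+2}. odd j \<and> j \<noteq> 1})"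
  shows "homology_group 0 (top_of_set R) \<cong> sum_group {..<n} (\<lambda>_. integer_group)"
    and "q \<noteq> 0 \<Longrightarrow> trivial_group (homology_group q (top_of_set R))"
proof -
  define J where "J = {j\<in>{1..2*n+2}. odd j \<and> j \<noteq> (1::nat)}"
  define U where "U = Qd n \<delta> ` J"
  have RU: "R = \<Union>U" by (simp add: R_def U_def J_def)
  have inj: "inj_on (Qd n \<delta>) J"
  proof
    fix j k assume j: "j \<in> J" and k: "k \<in> J" and eq: "Qd n \<delta> j = Qd n \<delta> k"
    show "j = k"
    proof (rule ccontr)
      assume "j \<noteq> k"
      then have "Qd n \<delta> j \<inter> Qd n \<delta> k = {}" using Qd_disjoint[OF n g, of j k] j k by (auto simp: J_def)
      then show False using eq Qd_nonempty[OF n d, of j] j by (auto simp: J_def)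
    qed
  qed
  have cardU: "card U = n" using inj card_odd_indices[of n] by (simp add: U_def J_def card_image)
  have finU: "finite U" by (simp add: U_def J_def)
  have disj: "pairwise disjnt U"
    unfolding pairwise_def disjnt_def U_def using Qd_disjoint[OF n g] by (auto simp: J_def)
  have sub: "S \<subseteq> R" if "S \<in> U" for S using that RU by auto
  have ope: "openin (top_of_set R) S" if S: "S \<in> U" for S
  proof -
    obtain j where j: "j \<in> J" "S = Qd n \<delta> j" using S by (auto simp: U_def)
    have "S = R \<inter> {x. A1 n x j > 0}"
    proof
      show "S \<subseteq> R \<inter> {x. A1 n x j > 0}" using sub[OF S] j by (auto simp: Qd_def)
      show "R \<inter> {x. A1 n x j > 0} \<subseteq> S"
      proof
        fix x assume x: "x \<in> R \<inter> {x. A1 n x j > 0}"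
        then obtain k where k: "k \<in> J" "x \<in> Qd n \<delta> k" by (auto simp: R_def J_def)
        have "k = j"
        proof (rule ccontr)
          assume "k \<noteq> j"
          have "\<not> adj n j k" using adj_parity[of j n k] j k by (auto simp: J_def)
          then have "A1 n x k < 0" using good_pos[OF g _ , of x j k] \<open>k \<noteq> j\<close> j k x by (auto simp: J_def Qd_def)
          then show False using k by (auto simp: Qd_def)
        qed
        then show "x \<in> S" using k j by simp
      qed
    qed
    also have "openin (top_of_set R) \<dots>"
      by (rule openin_open_Int) (intro open_Collect_less continuous_intros)
    finally show ?thesis .
  qed
  have add: "(\<lambda>x. gfinprod (homology_group p (top_of_set R))
                      (\<lambda>v. hom_induced p (subtopology (top_of_set R) v) {} (top_of_set R) {} id (x v)) U)
     \<in> iso (sum_group U (\<lambda>S. homology_group p (subtopology (top_of_set R) S))) (homology_group p (top_of_set R))" for p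
    by (rule homology_additivity_axiom[OF disj]) (use RU ope in auto)
  have iso_sum: "homology_group p (top_of_set R) \<cong> sum_group U (\<lambda>S. homology_group p (subtopology (top_of_set R) S))" for p
  proof -
    have "sum_group U (\<lambda>S. homology_group p (subtopology (top_of_set R) S)) \<cong> homology_group p (top_of_set R)"
      using add[of p] by (rule is_isoI)
    moreover have "group (sum_group U (\<lambda>S. homology_group p (subtopology (top_of_set R) S)))" by simp
    ultimately show ?thesis using group.iso_sym by blast
  qed
  have subt: "subtopology (top_of_set R) S = top_of_set S" if "S \<in> U" for S
    using sub[OF that] by (simp add: subtopology_subtopology Int_absorb1)
  have cvx: "convex S" "S \<noteq> {}" if "S \<in> U" for S
    using that Qd_nonempty[OF n d] convex_Qd by (auto simp: U_def J_def)
  have "homology_group 0 (top_of_set R) \<cong> sum_group U (\<lambda>S. homology_group 0 (subtopology (top_of_set R) S))"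
    by (rule iso_sum)
  also have "\<dots> \<cong> sum_group U (\<lambda>_. integer_group)"
    by (rule iso_sum_groupI) (use subt cvx iso_H0_convex in auto)
  also have "\<dots> \<cong> free_Abelian_group U" by (rule isomorphic_sum_integer_group)
  also have "\<dots> \<cong> free_Abelian_group {..<n}"
    using finU cardU by (simp add: isomorphic_free_Abelian_groups eqpoll_iff_card)
  also have "\<dots> \<cong> sum_group {..<n} (\<lambda>_. integer_group)"
  proof -
    have "group (sum_group {..<n} (\<lambda>_. integer_group))" by simp
    then show ?thesis using group.iso_sym isomorphic_sum_integer_group[of "{..<n}"] by blast
  qed
  finally show "homology_group 0 (top_of_set R) \<cong> sum_group {..<n} (\<lambda>_. integer_group)" .
  assume q: "q \<noteq> 0"
  have "trivial_group (sum_group U (\<lambda>S. homology_group q (subtopology (top_of_set R) S)))"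
    by (rule trivial_sum_group) (use subt cvx trivial_homology_convex q in auto)
  then show "trivial_group (homology_group q (top_of_set R))"
    using isomorphic_group_triviality[OF iso_sum[of q]] by simp
qed




lemma adj_sin:
  assumes n: "n \<ge> 1" and j: "j \<in> {1..2*n+2}" and j': "j' = nxt n j \<or> j' = prv n j"
  shows "sin (th n j - th n j') \<noteq> 0"
proof
  assume "sin (th n j - th n j') = 0"
  then obtain z :: int where z: "th n j - th n j' = of_int z * pi" by (auto simp: sin_zero_iff_int2)
  define k :: int where "k = int j - int j'"
  have "pi * of_int k / real (n+1) = of_int z * pi" using z by (simp add: th_def k_def diff_divide_distrib algebra_simps)
  then have "pi * (of_int k - of_int z * real (n+1)) = 0" by (simp add: field_simps)
  then have "of_int k = of_int z * real (n+1)" using pi_neq_zero by simp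
  then have kz: "k = z * int (n+1)" by (metis of_int_eq_iff of_int_mult of_int_of_nat_eq)
  have kv: "\<bar>k\<bar> = 1 \<or> \<bar>k\<bar> = 2*int n+1" using j j' by (auto simp: k_def nxt_def prv_def)
  have ak: "\<bar>k\<bar> = \<bar>z\<bar> * int (n+1)" using kz by (simp add: abs_mult)
  consider "\<bar>z\<bar> = 0" | "\<bar>z\<bar> = 1" | "\<bar>z\<bar> \<ge> 2" by linarith
  then show False
  proof cases
    case 1 then show ?thesis using ak kv by simp
  next
    case 2 then show ?thesis using ak kv n by simp
  next
    case 3
    then have "\<bar>z\<bar> * int (n+1) \<ge> 2 * int (n+1)" by (intro mult_right_mono) auto
    then have "\<bar>k\<bar> \<ge> 2 * int (n+1)" unfolding ak .
    then have "\<bar>k\<bar> \<ge> 2 * int n + 2" by simp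
    then show ?thesis using kv by (elim disjE) linarith+
  qed
qed

lemma A1_lin: "A1 n (y + t *\<^sub>R w) i = A1 n y i + t * L (th n i) w"
  by (simp add: A1_L L_def algebra_simps)

lemma L_bound: "\<bar>L \<phi> (vector [a, b])\<bar> \<le> 2" if "\<bar>a\<bar> \<le> 1" "\<bar>b\<bar> \<le> 1"
proof -
  have "\<bar>sin \<phi> * a\<bar> \<le> 1" "\<bar>cos \<phi> * b\<bar> \<le> 1" using that
    by (auto simp: abs_mult intro: mult_le_one)
  then show ?thesis by (simp add: L_def)
qed

lemma sign_region_sgn: "z \<in> sign_region n s \<Longrightarrow> i \<in> {1..2*n+2} \<Longrightarrow> sgn (A1 n z i) = s i"
  by (simp add: sign_region_def)

lemma closure_sign_ge:
  assumes "i \<in> {1..2*n+2}" "s i = 1" "z \<in> closure (sign_region n s)"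
  shows "A1 n z i \<ge> 0"
proof -
  have "sign_region n s \<subseteq> {z. A1 n z i \<ge> 0}"
  proof
    fix z assume "z \<in> sign_region n s"
    then have "sgn (A1 n z i) = 1" using sign_region_sgn[of z n s i] assms(1,2) by simp
    then show "z \<in> {z. A1 n z i \<ge> 0}" by (simp add: sgn_1_pos)
  qed
  moreover have "closed {z. A1 n z i \<ge> 0}" by (intro closed_Collect_le continuous_intros)
  ultimately show ?thesis using assms(3) closure_minimal by blast
qed

lemma closure_sign_le:
  assumes "i \<in> {1..2*n+2}" "s i = -1" "z \<in> closure (sign_region n s)"
  shows "A1 n z i \<le> 0"
proof -
  have "sign_region n s \<subseteq> {z. A1 n z i \<le> 0}"
  proof
    fix z assume "z \<in> sign_region n s"
    then have "sgn (A1 n z i) = -1" using sign_region_sgn[of z n s i] assms(1,2) by simp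
    then show "z \<in> {z. A1 n z i \<le> 0}" by (simp add: sgn_1_neg)
  qed
  moreover have "closed {z. A1 n z i \<le> 0}" by (intro closed_Collect_le continuous_intros)
  ultimately show ?thesis using assms(3) closure_minimal by blast
qed

lemma closure_sign_eq:
  assumes "i \<in> {1..2*n+2}" "s i = 0" "z \<in> closure (sign_region n s)"
  shows "A1 n z i = 0"
proof -
  have "sign_region n s \<subseteq> {z. A1 n z i = 0}"
  proof
    fix z assume "z \<in> sign_region n s"
    then have "sgn (A1 n z i) = 0" using sign_region_sgn[of z n s i] assms(1,2) by simp
    then show "z \<in> {z. A1 n z i = 0}" by (simp add: sgn_0_0)
  qed
  moreover have "closed {z. A1 n z i = 0}" by (intro closed_Collect_eq continuous_intros)
  ultimately show ?thesis using assms(3) closure_minimal by blast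
qed

lemma flat_cell_near_K:
  assumes n: "n \<ge> 1" and g: "good n \<delta>" and xV: "x \<in> Vd n \<delta>" and xK: "x \<notin> Kn n"
    and ne: "sign_region n s \<noteq> {}" and xC: "x \<in> closure (sign_region n s)"
    and const: "\<forall>z\<in>closure (sign_region n s). Fnet n z = c"
  shows False
proof -
  define J where "J = {1..2*n+2::nat}"
  define Rs where "Rs = sign_region n s"
  obtain y where y: "y \<in> Rs" using ne by (auto simp: Rs_def)
  have svals: "s i = -1 \<or> s i = 0 \<or> s i = 1" if "i \<in> J" for i
    using sign_region_sgn[OF y[unfolded Rs_def] that[unfolded J_def]] by (auto simp: sgn_if split: if_splits)
  obtain j where j: "j \<in> J" "A1 n x j > 0" using xK by (force simp: Kn_def J_def)
  have sj: "s j = 1"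
    using svals[OF j(1)] closure_sign_le[of j n s x] closure_sign_eq[of j n s x] j xC by (auto simp: J_def)
  have Tge: "A1 n x i \<ge> 0" if "i \<in> J" "s i \<noteq> -1" for i
    using svals[OF that(1)] that closure_sign_ge[of i n s x] closure_sign_eq[of i n s x] xC by (auto simp: J_def)
  have Tadj: "i = prv n j \<or> i = nxt n j" if "i \<in> J" "s i \<noteq> -1" "i \<noteq> j" for i
  proof -
    have "adj n j i"
    proof (rule ccontr)
      assume "\<not> adj n j i"
      then have "A1 n x i < 0" using good_pos[OF g xV, of j i] j that by (auto simp: J_def)
      then show False using Tge[OF that(1,2)] by simp
    qed
    then show ?thesis using adj_cases[of j n i] j that by (auto simp: J_def)
  qed
  have jJ: "j \<in> {1..2*n+2}" using j by (simp add: J_def)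
  have notboth: "\<not> (s (prv n j) \<noteq> -1 \<and> s (nxt n j) \<noteq> -1)"
  proof
    assume h: "s (prv n j) \<noteq> -1 \<and> s (nxt n j) \<noteq> -1"
    have pq: "prv n j \<in> J" "nxt n j \<in> J" using prv_in[OF jJ] nxt_in[OF jJ] by (auto simp: J_def)
    have "A1 n x (prv n j) \<ge> 0" "A1 n x (nxt n j) \<ge> 0" using Tge pq h by auto
    then show False using good_pos[OF g xV, of "nxt n j" "prv n j"] nxt_prv_distinct[OF n jJ] pq
      by (auto simp: J_def)
  qed
  define j' where "j' = (if s (prv n j) \<noteq> -1 then prv n j else nxt n j)"
  have j'c: "j' = nxt n j \<or> j' = prv n j" by (auto simp: j'_def)
  have T: "i = j \<or> i = j'" if "i \<in> J" "s i \<noteq> -1" for i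
    using Tadj[OF that] notboth that by (cases "i = j") (auto simp: j'_def)
  define w :: "real^2" where "w = vector [cos (th n j'), - sin (th n j')]"
  have Lj': "L (th n j') w = 0" by (simp add: w_def L_def algebra_simps)
  have Lj: "L (th n j) w = sin (th n j - th n j')" by (simp add: w_def L_def sin_diff algebra_simps)
  have Ljne: "L (th n j) w \<noteq> 0" using adj_sin[OF n jJ j'c] Lj by simp
  have Lb: "\<bar>L (th n i) w\<bar> \<le> 2" for i unfolding w_def by (rule L_bound) auto
  have zeroL: "L (th n i) w = 0" if "i \<in> J" "s i = 0" for i
    using T[OF that(1)] that sj Lj' by auto
  define M where "M = Min (insert 1 ((\<lambda>i. \<bar>A1 n y i\<bar>) ` {i\<in>J. s i \<noteq> 0}))"
  have finM: "finite (insert 1 ((\<lambda>i. \<bar>A1 n y i\<bar>) ` {i\<in>J. s i \<noteq> 0}))" by (simp add: J_def)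
  have Mpos: "M > 0" unfolding M_def using finM
  proof (subst Min_gr_iff)
    show "\<forall>a\<in>insert 1 ((\<lambda>i. \<bar>A1 n y i\<bar>) ` {i \<in> J. s i \<noteq> 0}). 0 < a"
    proof
      fix a assume "a \<in> insert 1 ((\<lambda>i. \<bar>A1 n y i\<bar>) ` {i \<in> J. s i \<noteq> 0})"
      then consider "a = 1" | i where "i \<in> J" "s i \<noteq> 0" "a = \<bar>A1 n y i\<bar>" by auto
      then show "0 < a"
      proof cases
        case 2
        then have "sgn (A1 n y i) \<noteq> 0" using sign_region_sgn[OF y[unfolded Rs_def], of i] by (auto simp: J_def)
        then show ?thesis using 2 by (simp add: sgn_0_0)
      qed simp
    qed
  qed auto
  have Mle: "M \<le> \<bar>A1 n y i\<bar>" if "i \<in> J" "s i \<noteq> 0" for i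
    unfolding M_def using finM that by (intro Min_le) auto
  define t where "t = M / 4"
  have tpos: "t > 0" using Mpos by (simp add: t_def)
  have yt: "y + t *\<^sub>R w \<in> Rs"
    unfolding Rs_def sign_region_def
  proof (intro CollectI ballI)
    fix i assume i: "i \<in> {1..2*n+2}"
    then have iJ: "i \<in> J" by (simp add: J_def)
    have sy: "sgn (A1 n y i) = s i" using sign_region_sgn[OF y[unfolded Rs_def] i] .
    show "sgn (A1 n (y + t *\<^sub>R w) i) = s i"
    proof (cases "s i = 0")
      case True
      then show ?thesis using zeroL[OF iJ True] sy by (simp add: A1_lin)
    next
      case False
      have "\<bar>t * L (th n i) w\<bar> \<le> t * 2" using Lb[of i] tpos by (simp add: abs_mult mult_left_mono)
      also have "\<dots> < \<bar>A1 n y i\<bar>" using Mle[OF iJ False] Mpos by (simp add: t_def)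
      finally have small: "\<bar>t * L (th n i) w\<bar> < \<bar>A1 n y i\<bar>" .
      have "sgn (A1 n y i + t * L (th n i) w) = sgn (A1 n y i)"
        using small by (auto simp: sgn_if)
      then show ?thesis using sy by (simp add: A1_lin)
    qed
  qed
  have Fform: "Fnet n z = (\<Sum>i\<in>J. (-1)^i * (if s i = 1 then A1 n z i else 0))" if "z \<in> Rs" for z
    unfolding Fnet_def J_def
  proof (rule sum.cong)
    fix i assume i: "i \<in> {1..2*n+2}"
    have "sgn (A1 n z i) = s i" using sign_region_sgn[OF that[unfolded Rs_def] i] .
    then show "(-1)^i * relu (A1 n z i) = (-1)^i * (if s i = 1 then A1 n z i else 0)"
      by (auto simp: relu_def sgn_if split: if_splits)
  qed simp
  have D: "(\<Sum>i\<in>J. (-1::real)^i * (if s i = 1 then L (th n i) w else 0)) = (-1)^j * L (th n j) w"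
  proof -
    have "(\<Sum>i\<in>J. (-1::real)^i * (if s i = 1 then L (th n i) w else 0))
        = (-1)^j * (if s j = 1 then L (th n j) w else 0) + (\<Sum>i\<in>J - {j}. (-1::real)^i * (if s i = 1 then L (th n i) w else 0))"
      using j(1) by (intro sum.remove) (auto simp: J_def)
    also have "(\<Sum>i\<in>J - {j}. (-1::real)^i * (if s i = 1 then L (th n i) w else 0)) = 0"
    proof (rule sum.neutral, rule ballI)
      fix i assume i: "i \<in> J - {j}"
      show "(-1::real)^i * (if s i = 1 then L (th n i) w else 0) = 0"
      proof (cases "s i = 1")
        case True
        then have "i = j'" using T[of i] i by auto
        then show ?thesis using Lj' by simp
      qed simp
    qed
    finally show ?thesis using sj by simp
  qed
  have "Fnet n (y + t *\<^sub>R w) = Fnet n y + t * ((-1)^j * L (th n j) w)"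
  proof -
    have "Fnet n (y + t *\<^sub>R w) = (\<Sum>i\<in>J. (-1)^i * (if s i = 1 then A1 n y i else 0) + t * ((-1)^i * (if s i = 1 then L (th n i) w else 0)))"
      unfolding Fform[OF yt] by (rule sum.cong) (auto simp: A1_lin algebra_simps)
    also have "\<dots> = Fnet n y + t * (\<Sum>i\<in>J. (-1::real)^i * (if s i = 1 then L (th n i) w else 0))"
      by (simp add: sum.distrib sum_distrib_left Fform[OF y])
    finally show ?thesis using D by simp
  qed
  moreover have "Fnet n (y + t *\<^sub>R w) = c" "Fnet n y = c"
    using const yt y closure_subset by (auto simp: Rs_def)
  ultimately show False using tpos Ljne by simp
qed


lemma sign_region_neg: "sign_region n (\<lambda>_. -1) = {x. \<forall>j\<in>{1..2*n+2}. A1 n x j < 0}"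
  by (auto simp: sign_region_def sgn_1_neg)

lemma open_Kint: "open {x. \<forall>j\<in>{1..2*n+2}. A1 n x j < 0}"
proof -
  have "{x. \<forall>j\<in>{1..2*n+2}. A1 n x j < 0} = (\<Inter>j\<in>{1..2*n+2}. {x. A1 n x j < 0})" by auto
  also have "open \<dots>" by (intro open_INT finite_atLeastAtMost ballI open_Collect_less continuous_intros)
  finally show ?thesis .
qed

lemma closure_Kint: "closure {x. \<forall>j\<in>{1..2*n+2}. A1 n x j < 0} = Kn n"
proof
  show "closure {x. \<forall>j\<in>{1..2*n+2}. A1 n x j < 0} \<subseteq> Kn n"
    by (rule closure_minimal[OF _ closed_Kn]) (auto simp: Kn_def)
  show "Kn n \<subseteq> closure {x. \<forall>j\<in>{1..2*n+2}. A1 n x j < 0}"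
  proof
    fix x assume x: "x \<in> Kn n"
    show "x \<in> closure {x. \<forall>j\<in>{1..2*n+2}. A1 n x j < 0}"
      unfolding closure_approachable
    proof (intro allI impI)
      fix e :: real assume e: "e > 0"
      define a where "a = min (1/2) (e / (2 * (norm x + 1)))"
      have nx: "0 < 2 * (norm x + 1)" by (smt (verit) norm_ge_zero)
      have pos: "e / (2 * (norm x + 1)) > 0" by (rule divide_pos_pos[OF e nx])
      have a1: "0 < a" unfolding a_def using pos by simp
      have a2: "a \<le> 1/2" unfolding a_def by (rule min.cobounded1)
      note a = a1 a2
      define t where "t = 1 - a"
      have t: "0 < t" "t < 1" using a by (auto simp: t_def)
      have "t *\<^sub>R x \<in> {x. \<forall>j\<in>{1..2*n+2}. A1 n x j < 0}"
      proof (intro CollectI ballI)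
        fix j assume j: "j \<in> {1..2*n+2}"
        have "A1 n x j \<le> 0" using x j by (auto simp: Kn_def)
        show "A1 n (t *\<^sub>R x) j < 0"
        proof (cases "A1 n x j + 1 \<ge> 0")
          case True
          have "t * (A1 n x j + 1) \<le> t * 1" using t \<open>A1 n x j \<le> 0\<close> True by (intro mult_left_mono) auto
          moreover have "A1 n (t *\<^sub>R x) j = t * (A1 n x j + 1) - 1" by (rule A1_scale)
          ultimately show ?thesis using t by linarith
        next
          case False
          then have "t * (A1 n x j + 1) \<le> 0" using t by (simp add: mult_nonneg_nonpos)
          then show ?thesis by (simp add: A1_scale)
        qed
      qed
      moreover have "dist (t *\<^sub>R x) x < e"
      proof -
        have "dist (t *\<^sub>R x) x = norm ((t - 1) *\<^sub>R x)" by (simp add: dist_norm algebra_simps)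
        also have "\<dots> = a * norm x" using a by (simp add: t_def)
        also have "\<dots> \<le> e / (2 * (norm x + 1)) * norm x" by (intro mult_right_mono) (auto simp: a_def)
        also have "\<dots> < e"
        proof -
          have "e / (2 * (norm x + 1)) * norm x = e * (norm x / (2 * (norm x + 1)))" by simp
          also have "norm x / (2 * (norm x + 1)) < 1"
          proof -
            have "norm x < 2 * (norm x + 1)" by (smt (verit) norm_ge_zero)
            then show ?thesis using divide_less_eq_1_pos[OF nx] by simp
          qed
          then have "e * (norm x / (2 * (norm x + 1))) < e * 1" using e by (intro mult_strict_left_mono)
          finally show ?thesis by simp
        qed
        finally show ?thesis .
      qed
      ultimately show "\<exists>y\<in>{x. \<forall>j\<in>{1..2*n+2}. A1 n x j < 0}. dist y x < e" by blast
    qed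
  qed
qed

theorem mainTheorem18:
  fixes n :: nat
  assumes "n \<ge> 1"
  defines "K \<equiv> {x :: real^2. \<forall>j\<in>{1..2*n+2}. A1 n x j \<le> 0}"
  defines "Fle \<equiv> {x :: real^2. Fnet n x \<le> 0}"
  shows "K \<in> cells n \<and> flat_cell n K \<and> aff_dim K = 2 \<and> Fnet n ` K = {0}
    \<and> K \<in> components (Fnet n -` {0} \<inter> flat_union n)
    \<and> relative_homology_group 1 (subtopology euclidean Fle) (Fle - K)
        \<cong> sum_group {..<n} (\<lambda>_. integer_group)
    \<and> (\<forall>i. i \<noteq> 1 \<longrightarrow> trivial_group (relative_homology_group i (subtopology euclidean Fle) (Fle - K)))
    \<and> total_local_H_complexity (Fnet n) 0 K = n"
proof -
  have n: "n \<ge> 1" by fact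
  have KK: "K = Kn n" by (simp add: K_def Kn_def)
  obtain \<delta> where d: "\<delta> > 0" "\<delta> \<le> 1" and g: "good n \<delta>"
    using delta_exists[OF n] unfolding good_def by blast
  define Kint where "Kint = {x :: real^2. \<forall>j\<in>{1..2*n+2}. A1 n x j < 0}"
  have Kint0: "0 \<in> Kint" by (simp add: Kint_def A1_def)
  have sr: "sign_region n (\<lambda>_. -1) = Kint" by (simp add: sign_region_neg Kint_def)
  have clK: "closure Kint = K" using closure_Kint[of n] by (simp add: Kint_def KK)
  have F0: "\<forall>x\<in>K. Fnet n x = 0" using Fnet_Kn KK by blast
  have cell: "K \<in> cells n"
    unfolding cells_def using sr clK Kint0 by (auto intro!: exI[of _ "\<lambda>_. -1"])
  have flat: "flat_cell n K" unfolding flat_cell_def using cell F0 by blast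
  have K0: "0 \<in> K" using zero_Kn KK by simp
  have aff: "aff_dim K = 2"
  proof -
    have "Kint \<subseteq> K" using clK closure_subset by blast
    moreover have "open Kint" using open_Kint[of n] by (simp add: Kint_def)
    ultimately have "Kint \<subseteq> interior K" by (rule interior_maximal)
    then have "interior K \<noteq> {}" using Kint0 by auto
    then show ?thesis by (simp add: aff_dim_nonempty_interior)
  qed
  have img: "Fnet n ` K = {0}" using F0 K0 by auto
  define S where "S = Fnet n -` {0} \<inter> flat_union n"
  define V where "V = Vd n \<delta>"
  have KS: "K \<subseteq> S" using flat F0 by (auto simp: S_def flat_union_def)
  have SV: "S \<inter> V \<subseteq> K"
  proof
    fix x assume x: "x \<in> S \<inter> V"
    show "x \<in> K"
    proof (rule ccontr)
      assume xK: "x \<notin> K"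
      obtain C where C: "flat_cell n C" "x \<in> C" using x by (auto simp: S_def flat_union_def)
      obtain s where s: "C = closure (sign_region n s)" "sign_region n s \<noteq> {}"
        using C(1) by (auto simp: flat_cell_def cells_def)
      obtain c where c: "\<forall>z\<in>C. Fnet n z = c" using C(1) by (auto simp: flat_cell_def)
      show False
        using flat_cell_near_K[OF n g _ _ s(2), of x c] x xK C(2) c s(1) by (auto simp: V_def KK)
    qed
  qed
  have comp: "K \<in> components S"
  proof -
    have "K = connected_component_set S 0"
    proof
      show "K \<subseteq> connected_component_set S 0"
        by (rule connected_component_maximal[OF K0]) (use KS convex_connected convex_Kn KK in auto)
      show "connected_component_set S 0 \<subseteq> K"
      proof -
        define C where "C = connected_component_set S 0"
        have cC: "connected C" by (simp add: C_def)
        have CS: "C \<subseteq> S" by (simp add: C_def connected_component_subset)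
        have "0 \<in> S" using KS K0 by blast
        then have C0: "0 \<in> C" by (simp add: C_def)
        have KV: "K \<subseteq> V" using Kn_Vd[OF d(1)] KK by (simp add: V_def)
        have "V \<inter> C = {} \<or> (- K) \<inter> C = {}"
        proof (rule connectedD[OF cC])
          show "open V" by (simp add: V_def open_Vd)
          show "open (- K)" using closed_Kn KK by (simp add: open_Compl)
          show "V \<inter> - K \<inter> C = {}" using CS SV by auto
          show "C \<subseteq> V \<union> - K" using KV by auto
        qed
        moreover have "0 \<in> V \<inter> C" using C0 K0 KV by auto
        ultimately have "(- K) \<inter> C = {}" by auto
        then show ?thesis by (auto simp: C_def)
      qed
    qed
    moreover have "0 \<in> S" using KS K0 by auto
    ultimately show ?thesis by (auto simp: components_iff)
  qed
  define R where "R = \<Union> (Qd n \<delta> ` {j\<in>{1..2*n+2}. odd j \<and> j \<noteq> 1})"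
  have chain: "relative_homology_group p (top_of_set Fle) (Fle - K) \<cong> homology_group (p-1) (top_of_set R)" for p
    using homology_chain[OF n g d(1), of p] by (simp add: Fle_def R_def KK)
  have H1: "relative_homology_group 1 (top_of_set Fle) (Fle - K) \<cong> sum_group {..<n} (\<lambda>_. integer_group)"
  proof -
    have c1: "relative_homology_group 1 (top_of_set Fle) (Fle - K) \<cong> homology_group 0 (top_of_set R)"
      using chain[of 1] by simp
    have r0: "homology_group 0 (top_of_set R) \<cong> sum_group {..<n} (\<lambda>_. integer_group)"
      using homology_R(1)[OF n g d(1)] by (simp add: R_def)
    show ?thesis by (rule iso_trans[OF c1 r0])
  qed
  have Hi: "trivial_group (relative_homology_group i (top_of_set Fle) (Fle - K))" if "i \<noteq> 1" for i
  proof -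
    have "trivial_group (homology_group (i-1) (top_of_set R))"
      using homology_R(2)[OF n g d(1), of "i-1"] that by (simp add: R_def)
    then show ?thesis using isomorphic_group_triviality[OF chain[of i]] by simp
  qed
  have cx: "total_local_H_complexity (Fnet n) 0 K = n"
  proof -
    define r where "r = (\<lambda>i. group_rank (relative_homology_group i (top_of_set Fle) (Fle - K)))"
    have r1: "r 1 = n"
      using group_rank_iso[OF abelian_relative_homology_group comm_group_ZG H1] group_rank_ZG[of n]
      by (simp add: r_def)
    have ri: "r i = 0" if "i \<noteq> 1" for i using group_rank_trivial[OF Hi[OF that]] by (simp add: r_def)
    have set: "{i. r i \<noteq> 0} = {1}"
    proof -
      have "r i \<noteq> 0 \<longleftrightarrow> i = 1" for i using ri[of i] r1 n by (cases "i = 1") auto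
      then show ?thesis by auto
    qed
    have "total_local_H_complexity (Fnet n) 0 K = (\<Sum>i\<in>{i. r i \<noteq> 0}. r i)"
      by (simp add: total_local_H_complexity_def r_def Fle_def Let_def)
    also have "\<dots> = n" using set r1 by simp
    finally show ?thesis .
  qed
  show ?thesis using cell flat aff img comp H1 Hi cx by (simp add: S_def)
qed

end
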